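(* Consider the semidiscrete DG scheme described in the context on a single element $\Omega_j$. Suppose that at time $t$ the element values $u^h(\cdot,t)\in\Pi^q$, $v^h(\cdot,t)\in\Pi^s$ on $\Omega_j$ are given, and that the boundary states (fluxes) $v^*$ and $\nabla u^*$ on $\partial\Omega_j$ are given. Then the time derivatives $\partial_t u^h$ and $\partial_t v^h$ on $\Omega_j$ are uniquely determined by the equations (1), (2), (3) below (for all admissible test functions), and the discrete energy $E_j^h(t)=\int_{\Omega_j}\tfrac12 (v^h)^2+\tfrac12 c^2|\nabla u^h|^2$ satisfies \begin{multline*} \frac{dE_j^h}{dt}=\int_{\partial\Omega_j}\Big[-\tfrac12 c^2|\nabla u^h|^2\,\mathbf{w}\cdot\mathbf{n}-\tfrac12 (v^h)^2\,\mathbf{w}\cdot\mathbf{n}+c^2(v^*-v^h)\nabla u^h\cdot\mathbf{n}\\ -c^2\nabla u^h\cdot(\nabla u^*-\nabla u^h)\,\mathbf{w}\cdot\mathbf{n}+c^2 v^h\nabla u^*\cdot\mathbf{n}-v^h(v^*-v^h)\,\mathbf{w}\cdot\mathbf{n}\Big]. \end{multline*}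
   Context: Let $m\ge1$, $c>0$ and a constant vector $\mathbf{w}\in\mathbb{R}^m$. The advective wave equation $(\partial_t+\mathbf{w}\cdot\nabla)^2u=c^2\Delta u$ is written as the first-order-in-time system $\partial_t u+\mathbf{w}\cdot\nabla u-v=0$, $\partial_t v+\mathbf{w}\cdot\nabla v-c^2\Delta u=0$. The domain is partitioned into elements $\Omega_j$; $\mathbf{n}$ denotes the outward unit normal on $\partial\Omega_j$. On $\Omega_j$ the approximations $u^h$ and $v^h$ are polynomials of degree $q$ and $s$ respectively ($\Pi^q$, $\Pi^s$ denote the polynomial spaces of degrees $q$, $s$ in $m$ variables). The local scheme on $\Omega_j$ is: for all $\phi_u\in\Pi^q$, all $\phi_v\in\Pi^s$ and all constants $\tilde\phi_u$, (1) $\int_{\Omega_j}c^2\nabla\phi_u\cdot\nabla(\partial_t u^h+\mathbf{w}\cdot\nabla u^h-v^h)=\int_{\partial\Omega_j}c^2(v^*-v^h)\nabla\phi_u\cdot\mathbf{n}-c^2\nabla\phi_u\cdot(\nabla u^*-\nabla u^h)\,\mathbf{w}\cdot\mathbf{n}$, (2) $\int_{\Omega_j}\phi_v\partial_t v^h+\phi_v\mathbf{w}\cdot\nabla v^h+c^2\nabla u^h\cdot\nabla\phi_v=\int_{\partial\Omega_j}c^2\phi_v\nabla u^*\cdot\mathbf{n}-(v^*-v^h)\phi_v\,\mathbf{w}\cdot\mathbf{n}$, (3) $\int_{\Omega_j}\tilde\phi_u(\partial_t u^h+\mathbf{w}\cdot\nabla u^h-v^h)=0$. Here $v^*$ (scalar)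 and $\nabla u^*$ (vector) are given functions on $\partial\Omega_j$ (the numerical fluxes). *)

theory Defs
  imports "HOL-Analysis.Analysis"
begin

text \<open>Points of R^m are vectors of type real^'n (m = CARD('n)).\<close>

definition multi_idx :: "nat \<Rightarrow> ('n::finite \<Rightarrow> nat) set" where
  "multi_idx q = {\<alpha>. sum \<alpha> UNIV \<le> q}"

definition monomial_fn :: "('n::finite \<Rightarrow> nat) \<Rightarrow> real^'n \<Rightarrow> real" where
  "monomial_fn \<alpha> x = (\<Prod>i\<in>UNIV. (x $ i) ^ (\<alpha> i))"

definition polys :: "nat \<Rightarrow> (real^'n::finite \<Rightarrow> real) set" where
  "polys q = {f. \<exists>c. f = (\<lambda>x. \<Sum>\<alpha>\<in>multi_idx q. c \<alpha> * monomial_fn \<alpha> x)}"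

definition grad :: "(real^'n::finite \<Rightarrow> real) \<Rightarrow> real^'n \<Rightarrow> real^'n" where
  "grad f x = (\<chi> i. frechet_derivative f (at x) (axis i 1))"

text \<open>A single element: a nonempty bounded open set, a finite measure S (surface
measure) concentrated on its boundary, and an outward unit normal nrm, such that the
divergence theorem holds for polynomial fields.\<close>
definition dg_element :: "(real^'n::finite) set \<Rightarrow> (real^'n) measure \<Rightarrow> (real^'n \<Rightarrow> real^'n) \<Rightarrow> bool" where
  "dg_element \<Omega> S nrm \<longleftrightarrow>
     open \<Omega> \<and> bounded \<Omega> \<and> \<Omega> \<noteq> {} \<and>
     sets S = sets lborel \<and> emeasure S (space S) < \<infinity> \<and>
     (AE x in S. x \<in> frontier \<Omega>) \<and>
     nrm \<in> borel_measurable S \<and> (AE x in S. norm (nrm x) = 1) \<and>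
     (\<forall>g k i. g \<in> polys k \<longrightarrow>
        (LINT x:\<Omega>|lborel. frechet_derivative g (at x) (axis i 1))
          = (LINT x|S. g x * (nrm x $ i)))"

definition flux_ok :: "(real^'n::finite) set \<Rightarrow> (real^'n) measure \<Rightarrow> (real^'n \<Rightarrow> real) \<Rightarrow> (real^'n \<Rightarrow> real^'n) \<Rightarrow> bool" where
  "flux_ok \<Omega> S vs gs \<longleftrightarrow>
     vs \<in> borel_measurable S \<and> gs \<in> borel_measurable S \<and>
     bounded (vs ` frontier \<Omega>) \<and> bounded (gs ` frontier \<Omega>)"

text \<open>The local scheme (1)-(3): u, v element values, vs = v^*, gs = grad u^*,
ut, vt the time derivatives.\<close>
definition dg_scheme ::
  "(real^'n::finite) set \<Rightarrow> (real^'n) measure \<Rightarrow> (real^'n \<Rightarrow> real^'n) \<Rightarrow> real \<Rightarrow> real^'n \<Rightarrow> nat \<Rightarrow> nat \<Rightarrow>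
   (real^'n \<Rightarrow> real) \<Rightarrow> (real^'n \<Rightarrow> real) \<Rightarrow> (real^'n \<Rightarrow> real) \<Rightarrow> (real^'n \<Rightarrow> real^'n) \<Rightarrow>
   (real^'n \<Rightarrow> real) \<Rightarrow> (real^'n \<Rightarrow> real) \<Rightarrow> bool" where
  "dg_scheme \<Omega> S nrm c w q s u v vs gs ut vt \<longleftrightarrow>
     (\<forall>\<phi>\<in>polys q.
        (LINT x:\<Omega>|lborel. c\<^sup>2 * (grad \<phi> x \<bullet> grad (\<lambda>y. ut y + w \<bullet> grad u y - v y) x))
        = (LINT x|S. c\<^sup>2 * (vs x - v x) * (grad \<phi> x \<bullet> nrm x)
                     - c\<^sup>2 * (grad \<phi> x \<bullet> (gs x - grad u x)) * (w \<bullet> nrm x))) \<and>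
     (\<forall>\<phi>\<in>polys s.
        (LINT x:\<Omega>|lborel. \<phi> x * vt x + \<phi> x * (w \<bullet> grad v x) + c\<^sup>2 * (grad u x \<bullet> grad \<phi> x))
        = (LINT x|S. c\<^sup>2 * \<phi> x * (gs x \<bullet> nrm x) - (vs x - v x) * \<phi> x * (w \<bullet> nrm x))) \<and>
     (\<forall>k::real. (LINT x:\<Omega>|lborel. k * (ut x + w \<bullet> grad u x - v x)) = 0)"

definition dg_energy :: "(real^'n::finite) set \<Rightarrow> real \<Rightarrow> (real^'n \<Rightarrow> real) \<Rightarrow> (real^'n \<Rightarrow> real) \<Rightarrow> real" where
  "dg_energy \<Omega> c u v = (LINT x:\<Omega>|lborel. 1/2 * (v x)\<^sup>2 + 1/2 * c\<^sup>2 * (norm (grad u x))\<^sup>2)"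

definition energy_flux ::
  "(real^'n::finite) measure \<Rightarrow> (real^'n \<Rightarrow> real^'n) \<Rightarrow> real \<Rightarrow> real^'n \<Rightarrow>
   (real^'n \<Rightarrow> real) \<Rightarrow> (real^'n \<Rightarrow> real) \<Rightarrow> (real^'n \<Rightarrow> real) \<Rightarrow> (real^'n \<Rightarrow> real^'n) \<Rightarrow> real" where
  "energy_flux S nrm c w u v vs gs =
     (LINT x|S. - 1/2 * c\<^sup>2 * (norm (grad u x))\<^sup>2 * (w \<bullet> nrm x)
               - 1/2 * (v x)\<^sup>2 * (w \<bullet> nrm x)
               + c\<^sup>2 * (vs x - v x) * (grad u x \<bullet> nrm x)
               - c\<^sup>2 * (grad u x \<bullet> (gs x - grad u x)) * (w \<bullet> nrm x)
               + c\<^sup>2 * v x * (gs x \<bullet> nrm x)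
               - v x * (vs x - v x) * (w \<bullet> nrm x))"

end

theory Submission
  imports Defs "HOL-Computational_Algebra.Polynomial"
begin

inductive ispoly :: "(real^'n::finite \<Rightarrow> real) \<Rightarrow> bool" where
  ip_const: "ispoly (\<lambda>x. a)"
| ip_coord: "ispoly (\<lambda>x. x $ i)"
| ip_add: "ispoly f \<Longrightarrow> ispoly g \<Longrightarrow> ispoly (\<lambda>x. f x + g x)"
| ip_mult: "ispoly f \<Longrightarrow> ispoly g \<Longrightarrow> ispoly (\<lambda>x. f x * g x)"

lemma ip_scale: "ispoly f \<Longrightarrow> ispoly (\<lambda>x. a * f x)"
  using ip_mult[OF ip_const] by blast

lemma ip_minus: "ispoly f \<Longrightarrow> ispoly g \<Longrightarrow> ispoly (\<lambda>x. f x - g x)"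
proof -
  assume "ispoly f" "ispoly g"
  then have "ispoly (\<lambda>x. f x + (-1) * g x)" by (intro ip_add ip_scale)
  then show ?thesis by simp
qed

lemma ip_sum: "finite A \<Longrightarrow> (\<And>a. a\<in>A \<Longrightarrow> ispoly (f a)) \<Longrightarrow> ispoly (\<lambda>x. \<Sum>a\<in>A. f a x)"
proof (induction A rule: finite_induct)
  case empty then show ?case using ip_const[of 0] by simp
next
  case (insert a A) then show ?case by (simp add: ip_add)
qed

lemma ip_prod: "finite A \<Longrightarrow> (\<And>a. a\<in>A \<Longrightarrow> ispoly (f a)) \<Longrightarrow> ispoly (\<lambda>x. \<Prod>a\<in>A. f a x)"
proof (induction A rule: finite_induct)
  case empty then show ?case using ip_const[of 1] by simp
next
  case (insert a A) then show ?case by (simp add: ip_mult)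
qed

lemma ip_power: "ispoly f \<Longrightarrow> ispoly (\<lambda>x. f x ^ k)"
proof (induction k)
  case 0 then show ?case using ip_const[of 1] by simp
next
  case (Suc k) then show ?case using ip_mult[of f "\<lambda>x. f x ^ k"] by simp
qed

lemma grad_eq:
  assumes "(f has_derivative (\<lambda>h. a \<bullet> h)) (at x)"
  shows "grad f x = a"
proof -
  have "frechet_derivative f (at x) = (\<lambda>h. a \<bullet> h)"
    using frechet_derivative_at[OF assms] by simp
  then show ?thesis unfolding grad_def by (simp add: inner_axis vec_eq_iff)
qed

lemma gradD: "ispoly f \<Longrightarrow> (f has_derivative (\<lambda>h. grad f x \<bullet> h)) (at x)"
proof (induction rule: ispoly.induct)
  case (ip_const a)
  have d: "((\<lambda>x. a) has_derivative (\<lambda>h. 0 \<bullet> h)) (at x)" by simp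
  show ?case using d grad_eq[OF d] by simp
next
  case (ip_coord i)
  have e: "(\<lambda>x::real^'a. x $ i) = (\<lambda>x. axis i 1 \<bullet> x)" by (simp add: inner_axis')
  have d: "((\<lambda>x::real^'a. x $ i) has_derivative (\<lambda>h. axis i 1 \<bullet> h)) (at x)"
    unfolding e by (rule bounded_linear_imp_has_derivative) (rule bounded_linear_inner_right)
  show ?case using d grad_eq[OF d] by simp
next
  case (ip_add f g)
  have d: "((\<lambda>x. f x + g x) has_derivative (\<lambda>h. (grad f x + grad g x) \<bullet> h)) (at x)"
    using has_derivative_add[OF ip_add.IH] by (simp add: inner_add_left)
  show ?case using d grad_eq[OF d] by simp
next
  case (ip_mult f g)
  have d: "((\<lambda>x. f x * g x) has_derivative (\<lambda>h. (f x *\<^sub>R grad g x + g x *\<^sub>R grad f x) \<bullet> h)) (at x)"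
    using has_derivative_mult[OF ip_mult.IH] by (simp add: inner_add_left algebra_simps)
  show ?case using d grad_eq[OF d] by simp
qed

lemma grad_add: "ispoly f \<Longrightarrow> ispoly g \<Longrightarrow> grad (\<lambda>x. f x + g x) x = grad f x + grad g x"
  by (rule grad_eq) (use has_derivative_add[OF gradD gradD] in \<open>simp add: inner_add_left\<close>)

lemma grad_minus: "ispoly f \<Longrightarrow> ispoly g \<Longrightarrow> grad (\<lambda>x. f x - g x) x = grad f x - grad g x"
  by (rule grad_eq) (use has_derivative_diff[OF gradD gradD] in \<open>simp add: inner_diff_left\<close>)

lemma grad_mult: "ispoly f \<Longrightarrow> ispoly g \<Longrightarrow> grad (\<lambda>x. f x * g x) x = f x *\<^sub>R grad g x + g x *\<^sub>R grad f x"
  by (rule grad_eq) (use has_derivative_mult[OF gradD gradD] in \<open>simp add: inner_add_left algebra_simps\<close>)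

lemma grad_const: "grad (\<lambda>x. a) x = 0"
  by (rule grad_eq) simp

lemma grad_scale: "ispoly f \<Longrightarrow> grad (\<lambda>x. a * f x) x = a *\<^sub>R grad f x"
  using grad_mult[OF ip_const, of f a] by (simp add: grad_const)

lemma grad_coord: "grad (\<lambda>x. x $ i) x = axis i 1"
proof -
  have e: "(\<lambda>x::real^'a. x $ i) = (\<lambda>x. axis i 1 \<bullet> x)" by (simp add: inner_axis')
  have d: "((\<lambda>x::real^'a. x $ i) has_derivative (\<lambda>h. axis i 1 \<bullet> h)) (at x)"
    unfolding e by (rule bounded_linear_imp_has_derivative) (rule bounded_linear_inner_right)
  show ?thesis by (rule grad_eq[OF d])
qed

lemma grad_sum: "finite A \<Longrightarrow> (\<And>a. a\<in>A \<Longrightarrow> ispoly (f a)) \<Longrightarrow>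
   grad (\<lambda>x. \<Sum>a\<in>A. f a x) x = (\<Sum>a\<in>A. grad (f a) x)"
proof (induction A rule: finite_induct)
  case empty then show ?case by (simp add: grad_const)
next
  case (insert a A)
  then show ?case by (simp add: grad_add ip_sum)
qed

lemma ip_grad: "ispoly f \<Longrightarrow> ispoly (\<lambda>x. grad f x $ i)"
proof (induction rule: ispoly.induct)
  case (ip_const a) then show ?case by (simp add: grad_const ispoly.ip_const)
next
  case (ip_coord k) then show ?case by (simp add: grad_coord ispoly.ip_const)
next
  case (ip_add f g) then show ?case by (simp add: grad_add ispoly.ip_add)
next
  case (ip_mult f g) then show ?case by (simp add: grad_mult ispoly.ip_add ispoly.ip_mult)
qed

lemma grad_mixed: "ispoly f \<Longrightarrow> grad (\<lambda>x. grad f x $ i) x $ j = grad (\<lambda>x. grad f x $ j) x $ i"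
proof (induction arbitrary: x rule: ispoly.induct)
  case (ip_const a) then show ?case by (simp add: grad_const)
next
  case (ip_coord k) then show ?case by (simp add: grad_coord grad_const)
next
  case (ip_add f g)
  have e: "\<And>i. (\<lambda>x. grad (\<lambda>x. f x + g x) x $ i) = (\<lambda>x. grad f x $ i + grad g x $ i)"
    using ip_add.hyps by (simp add: grad_add)
  have "\<And>i j. grad (\<lambda>x. grad f x $ i + grad g x $ i) x $ j = grad (\<lambda>x. grad f x $ i) x $ j + grad (\<lambda>x. grad g x $ i) x $ j"
    using ip_add.hyps by (simp add: grad_add ip_grad)
  then show ?case unfolding e using ip_add.IH by simp
next
  case (ip_mult f g)
  have e: "\<And>i. (\<lambda>x. grad (\<lambda>x. f x * g x) x $ i) = (\<lambda>x. f x * grad g x $ i + g x * grad f x $ i)"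
    using ip_mult.hyps by (simp add: grad_mult)
  have "\<And>i j. grad (\<lambda>x. f x * grad g x $ i + g x * grad f x $ i) x $ j =
     f x * grad (\<lambda>x. grad g x $ i) x $ j + grad g x $ i * grad f x $ j + g x * grad (\<lambda>x. grad f x $ i) x $ j + grad f x $ i * grad g x $ j"
    using ip_mult.hyps by (simp add: grad_add grad_mult ip_grad ispoly.ip_mult)
  then show ?case unfolding e using ip_mult.IH by simp
qed


lemma finite_multi_idx: "finite (multi_idx k :: ('n::finite \<Rightarrow> nat) set)"
proof -
  have "multi_idx k \<subseteq> Pi\<^sub>E (UNIV::'n set) (\<lambda>_. {..k})"
  proof
    fix \<alpha> :: "'n \<Rightarrow> nat" assume "\<alpha> \<in> multi_idx k"
    then have "sum \<alpha> UNIV \<le> k" by (simp add: multi_idx_def)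
    moreover have "\<And>i. \<alpha> i \<le> sum \<alpha> UNIV" by (rule member_le_sum) auto
    ultimately show "\<alpha> \<in> Pi\<^sub>E UNIV (\<lambda>_. {..k})" by (auto simp: PiE_UNIV_domain intro: order_trans)
  qed
  moreover have "finite (Pi\<^sub>E (UNIV::'n set) (\<lambda>_. {..k}))" by (rule finite_PiE) auto
  ultimately show ?thesis by (rule finite_subset)
qed

lemma polys_ispoly: "f \<in> polys k \<Longrightarrow> ispoly f"
proof -
  assume "f \<in> polys k"
  then obtain c where f: "f = (\<lambda>x. \<Sum>\<alpha>\<in>multi_idx k. c \<alpha> * monomial_fn \<alpha> x)" by (auto simp: polys_def)
  have m: "ispoly (monomial_fn \<alpha>)" for \<alpha> :: "'a \<Rightarrow> nat"
    unfolding monomial_fn_def[abs_def] by (intro ip_prod ip_power ip_coord) auto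
  show ?thesis unfolding f by (intro ip_sum ip_scale m finite_multi_idx)
qed

lemma polys_mono: "k \<le> k' \<Longrightarrow> f \<in> polys k \<Longrightarrow> f \<in> polys k'"
proof -
  assume kk: "k \<le> k'" and "f \<in> polys k"
  then obtain c where f: "f = (\<lambda>x. \<Sum>\<alpha>\<in>multi_idx k. c \<alpha> * monomial_fn \<alpha> x)" by (auto simp: polys_def)
  have sub: "multi_idx k \<subseteq> multi_idx k'" using kk by (auto simp: multi_idx_def)
  have "f = (\<lambda>x. \<Sum>\<alpha>\<in>multi_idx k'. (if \<alpha> \<in> multi_idx k then c \<alpha> else 0) * monomial_fn \<alpha> x)"
    unfolding f by (rule ext, rule sym, rule sum.mono_neutral_cong_right[OF finite_multi_idx sub]) auto
  then show ?thesis by (auto simp: polys_def)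
qed

lemma polys_add: "f \<in> polys k \<Longrightarrow> g \<in> polys k \<Longrightarrow> (\<lambda>x. f x + g x) \<in> polys k"
proof -
  assume "f \<in> polys k" "g \<in> polys k"
  then obtain c d where f: "f = (\<lambda>x. \<Sum>\<alpha>\<in>multi_idx k. c \<alpha> * monomial_fn \<alpha> x)"
    and g: "g = (\<lambda>x. \<Sum>\<alpha>\<in>multi_idx k. d \<alpha> * monomial_fn \<alpha> x)" by (auto simp: polys_def)
  have "(\<lambda>x. f x + g x) = (\<lambda>x. \<Sum>\<alpha>\<in>multi_idx k. (c \<alpha> + d \<alpha>) * monomial_fn \<alpha> x)"
    unfolding f g by (simp add: sum.distrib algebra_simps)
  then show ?thesis by (auto simp: polys_def)
qed

lemma multi_idx_0: "multi_idx 0 = {\<lambda>_. 0}"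
  by (auto simp: multi_idx_def)

lemma polys_const: "(\<lambda>x. a) \<in> polys 0"
proof -
  show ?thesis unfolding polys_def
    by (intro CollectI exI[where x="\<lambda>_. a"]) (simp add: multi_idx_0 monomial_fn_def)
qed

lemma polys_coord: "(\<lambda>x. x $ i) \<in> polys 1"
proof -
  define e where "e = (\<lambda>j. if j = i then 1 else (0::nat))"
  have em: "e \<in> multi_idx 1" by (simp add: multi_idx_def e_def)
  have me: "monomial_fn e x = x $ i" for x :: "real^'a"
  proof -
    have "monomial_fn e x = (\<Prod>j\<in>UNIV. if j = i then x $ j else 1)"
      unfolding monomial_fn_def e_def by (rule prod.cong) auto
    also have "\<dots> = x $ i" by (simp add: prod.delta)
    finally show ?thesis .
  qed
  have "(\<lambda>x::real^'a. x $ i) = (\<lambda>x. \<Sum>\<alpha>\<in>multi_idx 1. (\<lambda>\<beta>. if \<beta> = e then 1 else 0) \<alpha> * monomial_fn \<alpha> x)"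
  proof
    fix x :: "real^'a"
    have "(\<Sum>\<alpha>\<in>multi_idx 1. (\<lambda>\<beta>. if \<beta> = e then 1 else 0) \<alpha> * monomial_fn \<alpha> x)
        = (\<Sum>\<alpha>\<in>multi_idx 1. if \<alpha> = e then monomial_fn \<alpha> x else 0)"
      by (rule sum.cong) auto
    also have "\<dots> = x $ i" using em by (simp add: sum.delta finite_multi_idx me)
    finally show "x $ i = (\<Sum>\<alpha>\<in>multi_idx 1. (\<lambda>\<beta>. if \<beta> = e then 1 else 0) \<alpha> * monomial_fn \<alpha> x)" by simp
  qed
  then show ?thesis unfolding polys_def by (intro CollectI exI[where x="\<lambda>\<beta>. if \<beta> = e then 1 else 0"])
qed

lemma monomial_mult: "monomial_fn \<alpha> x * monomial_fn \<beta> x = monomial_fn (\<lambda>i. \<alpha> i + \<beta> i) x"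
  by (simp add: monomial_fn_def power_add prod.distrib)

lemma polys_mult: "f \<in> polys a \<Longrightarrow> g \<in> polys b \<Longrightarrow> (\<lambda>x. f x * g x) \<in> polys (a + b)"
proof -
  assume "f \<in> polys a" "g \<in> polys b"
  then obtain c d where f: "f = (\<lambda>x. \<Sum>\<alpha>\<in>multi_idx a. c \<alpha> * monomial_fn \<alpha> x)"
    and g: "g = (\<lambda>x. \<Sum>\<alpha>\<in>multi_idx b. d \<alpha> * monomial_fn \<alpha> x)" by (auto simp: polys_def)
  define A where "A = (multi_idx a :: ('a \<Rightarrow> nat) set)"
  define B where "B = (multi_idx b :: ('a \<Rightarrow> nat) set)"
  define C where "C = (multi_idx (a+b) :: ('a \<Rightarrow> nat) set)"
  define s where "s = (\<lambda>p::('a \<Rightarrow> nat) \<times> ('a \<Rightarrow> nat). (\<lambda>i. fst p i + snd p i))"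
  define e where "e = (\<lambda>\<gamma>. \<Sum>p\<in>{p \<in> A \<times> B. s p = \<gamma>}. c (fst p) * d (snd p))"
  have fin: "finite A" "finite B" "finite C" "finite (A \<times> B)" unfolding A_def B_def C_def by (auto simp: finite_multi_idx)
  have img: "s ` (A \<times> B) \<subseteq> C"
    by (auto simp: s_def A_def B_def C_def multi_idx_def sum.distrib)
  have "(\<lambda>x. f x * g x) = (\<lambda>x. \<Sum>\<gamma>\<in>C. e \<gamma> * monomial_fn \<gamma> x)"
  proof
    fix x :: "real^'a"
    have "f x * g x = (\<Sum>\<alpha>\<in>A. \<Sum>\<beta>\<in>B. (c \<alpha> * monomial_fn \<alpha> x) * (d \<beta> * monomial_fn \<beta> x))"
      unfolding f g A_def B_def by (simp add: sum_product)
    also have "\<dots> = (\<Sum>p\<in>A \<times> B. c (fst p) * d (snd p) * monomial_fn (s p) x)"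
      unfolding sum.cartesian_product by (rule sum.cong) (auto simp: s_def monomial_mult[symmetric] algebra_simps)
    also have "\<dots> = (\<Sum>\<gamma>\<in>C. \<Sum>p\<in>{p \<in> A \<times> B. s p = \<gamma>}. c (fst p) * d (snd p) * monomial_fn (s p) x)"
      by (rule sum.group[symmetric, OF fin(4) fin(3) img])
    also have "\<dots> = (\<Sum>\<gamma>\<in>C. e \<gamma> * monomial_fn \<gamma> x)"
      unfolding e_def sum_distrib_right by (intro sum.cong refl) auto
    finally show "f x * g x = (\<Sum>\<gamma>\<in>C. e \<gamma> * monomial_fn \<gamma> x)" .
  qed
  then show ?thesis unfolding polys_def C_def by (intro CollectI exI[where x=e])
qed

lemma ispoly_polys: "ispoly f \<Longrightarrow> \<exists>k. f \<in> polys k"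
proof (induction rule: ispoly.induct)
  case (ip_const a) then show ?case using polys_const by blast
next
  case (ip_coord i) then show ?case using polys_coord by blast
next
  case (ip_add f g)
  then obtain a b where "f \<in> polys a" "g \<in> polys b" by blast
  then have "f \<in> polys (max a b)" "g \<in> polys (max a b)"
    using polys_mono[of a "max a b"] polys_mono[of b "max a b"] by auto
  then show ?case using polys_add by blast
next
  case (ip_mult f g)
  then obtain a b where "f \<in> polys a" "g \<in> polys b" by blast
  then show ?case using polys_mult by blast
qed


definition linI :: "'i set \<Rightarrow> ('i \<Rightarrow> 'a \<Rightarrow> real) \<Rightarrow> ('a \<Rightarrow> real) set" where
  "linI A \<phi> = {f. \<exists>c. f = (\<lambda>x. \<Sum>a\<in>A. c a * \<phi> a x)}"

lemma polys_linI: "polys q = linI (multi_idx q) monomial_fn"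
  by (simp add: polys_def linI_def)

lemma linI_zero: "(\<lambda>x. 0) \<in> linI A \<phi>"
  unfolding linI_def by (intro CollectI exI[where x="\<lambda>_. 0"]) simp

lemma linI_lc: "f \<in> linI A \<phi> \<Longrightarrow> g \<in> linI A \<phi> \<Longrightarrow> (\<lambda>x. r * f x + g x) \<in> linI A \<phi>"
proof -
  assume "f \<in> linI A \<phi>" "g \<in> linI A \<phi>"
  then obtain c d where f: "f = (\<lambda>x. \<Sum>a\<in>A. c a * \<phi> a x)" and g: "g = (\<lambda>x. \<Sum>a\<in>A. d a * \<phi> a x)"
    by (auto simp: linI_def)
  have "(\<lambda>x. r * f x + g x) = (\<lambda>x. \<Sum>a\<in>A. (r * c a + d a) * \<phi> a x)"
    unfolding f g by (simp add: sum_distrib_left sum.distrib algebra_simps)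
  then show ?thesis unfolding linI_def by (intro CollectI exI[where x="\<lambda>a. r * c a + d a"])
qed

lemma linI_add: "f \<in> linI A \<phi> \<Longrightarrow> g \<in> linI A \<phi> \<Longrightarrow> (\<lambda>x. f x + g x) \<in> linI A \<phi>"
  using linI_lc[of f A \<phi> g 1] by simp

lemma linI_scale: "f \<in> linI A \<phi> \<Longrightarrow> (\<lambda>x. r * f x) \<in> linI A \<phi>"
  using linI_lc[of f A \<phi> "\<lambda>x. 0" r] linI_zero[of A \<phi>] by simp

lemma linI_diff: "f \<in> linI A \<phi> \<Longrightarrow> g \<in> linI A \<phi> \<Longrightarrow> (\<lambda>x. f x - g x) \<in> linI A \<phi>"
  using linI_lc[of g A \<phi> f "-1"] by simp

lemma linI_gen: "finite A \<Longrightarrow> a \<in> A \<Longrightarrow> \<phi> a \<in> linI A \<phi>"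
proof -
  assume fa: "finite A" "a \<in> A"
  have "\<phi> a = (\<lambda>x. \<Sum>b\<in>A. (if b = a then 1 else 0) * \<phi> b x)"
  proof
    fix x
    have "(\<Sum>b\<in>A. (if b = a then 1 else 0) * \<phi> b x) = (\<Sum>b\<in>A. if b = a then \<phi> b x else 0)"
      by (rule sum.cong) auto
    also have "\<dots> = \<phi> a x" using fa by (simp add: sum.delta)
    finally show "\<phi> a x = (\<Sum>b\<in>A. (if b = a then 1 else 0) * \<phi> b x)" by simp
  qed
  then show ?thesis unfolding linI_def by (intro CollectI exI[where x="\<lambda>b. if b = a then 1 else 0"])
qed

lemma linI_mono: "finite A' \<Longrightarrow> A \<subseteq> A' \<Longrightarrow> f \<in> linI A \<phi> \<Longrightarrow> f \<in> linI A' \<phi>"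
proof -
  assume fin: "finite A'" and sub: "A \<subseteq> A'" and "f \<in> linI A \<phi>"
  then obtain c where f: "f = (\<lambda>x. \<Sum>a\<in>A. c a * \<phi> a x)" by (auto simp: linI_def)
  have "f = (\<lambda>x. \<Sum>a\<in>A'. (if a \<in> A then c a else 0) * \<phi> a x)"
    unfolding f by (rule ext, rule sym, rule sum.mono_neutral_cong_right[OF fin sub]) auto
  then show ?thesis unfolding linI_def by (intro CollectI exI[where x="\<lambda>a. if a \<in> A then c a else 0"])
qed

lemma linI_insert: "finite A \<Longrightarrow> a \<notin> A \<Longrightarrow> f \<in> linI (insert a A) \<phi> \<Longrightarrow>
   \<exists>s g. g \<in> linI A \<phi> \<and> f = (\<lambda>x. s * \<phi> a x + g x)"
proof -
  assume fa: "finite A" "a \<notin> A" "f \<in> linI (insert a A) \<phi>"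
  then obtain c where f: "f = (\<lambda>x. \<Sum>b\<in>insert a A. c b * \<phi> b x)" by (auto simp: linI_def)
  have "f = (\<lambda>x. c a * \<phi> a x + (\<Sum>b\<in>A. c b * \<phi> b x))" unfolding f using fa by simp
  moreover have "(\<lambda>x. \<Sum>b\<in>A. c b * \<phi> b x) \<in> linI A \<phi>" unfolding linI_def by blast
  ultimately show ?thesis by blast
qed

lemma linI_empty: "f \<in> linI {} \<phi> \<Longrightarrow> f = (\<lambda>x. 0)"
  by (auto simp: linI_def)

lemma linI_sum: "finite P \<Longrightarrow> (\<And>p. p \<in> P \<Longrightarrow> \<Lambda> p \<in> linI A \<phi>) \<Longrightarrow> (\<lambda>x. \<Sum>p\<in>P. c p * \<Lambda> p x) \<in> linI A \<phi>"
proof (induction P rule: finite_induct)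
  case empty then show ?case using linI_zero by simp
next
  case (insert p P)
  then show ?case using linI_lc[of "\<Lambda> p" A \<phi> "\<lambda>x. \<Sum>p\<in>P. c p * \<Lambda> p x" "c p"] by simp
qed


lemma lin_solve_aux:
  fixes B :: "('a \<Rightarrow> real) \<Rightarrow> ('a \<Rightarrow> real) \<Rightarrow> real"
  assumes fin0: "finite A0"
    and bl: "\<And>f g h r. f \<in> linI A0 \<phi> \<Longrightarrow> g \<in> linI A0 \<phi> \<Longrightarrow> h \<in> linI A0 \<phi> \<Longrightarrow> B (\<lambda>x. r * f x + g x) h = r * B f h + B g h"
    and sy: "\<And>f g. f \<in> linI A0 \<phi> \<Longrightarrow> g \<in> linI A0 \<phi> \<Longrightarrow> B f g = B g f"
    and pd: "\<And>f. f \<in> linI A0 \<phi> \<Longrightarrow> B f f = 0 \<Longrightarrow> f = (\<lambda>x. 0)"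
  shows "finite A \<Longrightarrow> A \<subseteq> A0 \<Longrightarrow> (\<And>f g r. f \<in> linI A0 \<phi> \<Longrightarrow> g \<in> linI A0 \<phi> \<Longrightarrow> F (\<lambda>x. r * f x + g x) = r * F f + F g)
     \<Longrightarrow> \<exists>x\<in>linI A \<phi>. \<forall>\<psi>\<in>linI A \<phi>. B \<psi> x = F \<psi>"
proof (induction A arbitrary: F rule: finite_induct)
  case empty
  have z: "(\<lambda>x::'a. 0::real) \<in> linI A0 \<phi>" by (rule linI_zero)
  have "F (\<lambda>x. 1 * 0 + 0) = 1 * F (\<lambda>x. 0) + F (\<lambda>x. 0)" by (rule empty.prems(2)[OF z z])
  then have F0: "F (\<lambda>x. 0) = 0" by simp
  have "B (\<lambda>x. 1 * 0 + 0) (\<lambda>x. 0) = 1 * B (\<lambda>x. 0) (\<lambda>x. 0) + B (\<lambda>x. 0) (\<lambda>x. 0)" by (rule bl[OF z z z])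
  then have B0: "B (\<lambda>x. 0) (\<lambda>x. 0) = 0" by simp
  show ?case
  proof (intro bexI[of _ "\<lambda>x. 0"] ballI)
    fix \<psi> assume "\<psi> \<in> linI {} \<phi>"
    then have "\<psi> = (\<lambda>x. 0)" by (rule linI_empty)
    then show "B \<psi> (\<lambda>x. 0) = F \<psi>" using F0 B0 by simp
  qed (rule linI_zero)
next
  case (insert a A)
  let ?V = "linI A0 \<phi>" and ?L = "linI A \<phi>" and ?L' = "linI (insert a A) \<phi>"
  have LV: "f \<in> ?L \<Longrightarrow> f \<in> ?V" for f using insert.prems(1) fin0 by (intro linI_mono[of A0 A]) auto
  have L'V: "f \<in> ?L' \<Longrightarrow> f \<in> ?V" for f using insert.prems(1) fin0 by (intro linI_mono[of A0 "insert a A"]) auto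
  have LL': "f \<in> ?L \<Longrightarrow> f \<in> ?L'" for f using insert.hyps by (intro linI_mono[of "insert a A" A]) auto
  have mL': "\<phi> a \<in> ?L'" using insert.hyps by (intro linI_gen) auto
  have mV: "\<phi> a \<in> ?V" using L'V mL' by blast
  have Flin: "\<And>f g r. f \<in> ?V \<Longrightarrow> g \<in> ?V \<Longrightarrow> F (\<lambda>x. r * f x + g x) = r * F f + F g" by (rule insert.prems(2))
  have "\<exists>x\<in>?L. \<forall>\<psi>\<in>?L. B \<psi> x = F \<psi>"
    by (rule insert.IH) (use insert.prems in auto)
  then obtain x0 where x0: "x0 \<in> ?L" "\<forall>\<psi>\<in>?L. B \<psi> x0 = F \<psi>" by blast
  have Glin: "B (\<lambda>x. r * f x + g x) (\<phi> a) = r * B f (\<phi> a) + B g (\<phi> a)"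
    if "f \<in> ?V" "g \<in> ?V" for f g r using bl[OF that mV] .
  have "\<exists>x\<in>?L. \<forall>\<psi>\<in>?L. B \<psi> x = B \<psi> (\<phi> a)"
    by (rule insert.IH[of "\<lambda>\<psi>. B \<psi> (\<phi> a)"]) (use insert.prems(1) Glin in auto)
  then obtain y where y: "y \<in> ?L" "\<forall>\<psi>\<in>?L. B \<psi> y = B \<psi> (\<phi> a)" by blast
  define r0 where "r0 = (\<lambda>x. (-1) * y x + \<phi> a x)"
  have r0L': "r0 \<in> ?L'" unfolding r0_def using LL'[OF y(1)] mL' by (rule linI_lc)
  have r0V: "r0 \<in> ?V" using L'V r0L' by blast
  have yV: "y \<in> ?V" using LV y(1) by blast
  have x0V: "x0 \<in> ?V" using LV x0(1) by blast
  have orth: "B \<psi> r0 = 0" if "\<psi> \<in> ?L" for \<psi>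
  proof -
    have pV: "\<psi> \<in> ?V" using LV that by blast
    have "B \<psi> r0 = B r0 \<psi>" by (rule sy[OF pV r0V])
    also have "\<dots> = (-1) * B y \<psi> + B (\<phi> a) \<psi>" unfolding r0_def by (rule bl[OF yV mV pV])
    also have "\<dots> = (-1) * B \<psi> y + B \<psi> (\<phi> a)" using sy[OF yV pV] sy[OF mV pV] by simp
    also have "\<dots> = 0" using y(2) that by simp
    finally show ?thesis .
  qed
  show ?case
  proof (cases "B r0 r0 = 0")
    case True
    then have "r0 = (\<lambda>x. 0)" using pd r0V by blast
    then have "\<And>z. (-1) * y z + \<phi> a z = 0" unfolding r0_def by (simp add: fun_eq_iff)
    then have my: "\<phi> a = y" by (simp add: fun_eq_iff)
    show ?thesis
    proof (intro bexI[of _ x0] ballI)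
      fix \<psi> assume psi: "\<psi> \<in> ?L'"
      obtain s g where g: "g \<in> ?L" "\<psi> = (\<lambda>x. s * \<phi> a x + g x)"
        using linI_insert[OF insert.hyps(1) insert.hyps(2) psi] by blast
      have "\<psi> \<in> ?L" unfolding g(2) my using y(1) g(1) by (rule linI_lc)
      then show "B \<psi> x0 = F \<psi>" using x0 by blast
    qed (use LL' x0 in blast)
  next
    case False
    define t where "t = (F r0 - B r0 x0) / B r0 r0"
    define x where "x = (\<lambda>z. t * r0 z + x0 z)"
    have xL': "x \<in> ?L'" unfolding x_def using r0L' LL'[OF x0(1)] by (rule linI_lc)
    have xV: "x \<in> ?V" using L'V xL' by blast
    have Br0x: "B r0 x = F r0"
    proof -
      have "B r0 x = B x r0" by (rule sy[OF r0V xV])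
      also have "\<dots> = t * B r0 r0 + B x0 r0" unfolding x_def by (rule bl[OF r0V x0V r0V])
      also have "\<dots> = F r0 - B r0 x0 + B x0 r0" unfolding t_def using False by simp
      also have "\<dots> = F r0" using sy[OF r0V x0V] by simp
      finally show ?thesis .
    qed
    show ?thesis
    proof (intro bexI[of _ x] ballI xL')
      fix \<psi> assume psi: "\<psi> \<in> ?L'"
      obtain s g where g: "g \<in> ?L" "\<psi> = (\<lambda>x. s * \<phi> a x + g x)"
        using linI_insert[OF insert.hyps(1) insert.hyps(2) psi] by blast
      define g' where "g' = (\<lambda>z. s * y z + g z)"
      have g'L: "g' \<in> ?L" unfolding g'_def using y(1) g(1) by (rule linI_lc)
      have g'V: "g' \<in> ?V" using LV g'L by blast
      have pe: "\<psi> = (\<lambda>z. s * r0 z + g' z)" unfolding g(2) g'_def r0_def by (simp add: fun_eq_iff algebra_simps)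
      have Bg'x: "B g' x = F g'"
      proof -
        have "B g' x = B x g'" by (rule sy[OF g'V xV])
        also have "\<dots> = t * B r0 g' + B x0 g'" unfolding x_def by (rule bl[OF r0V x0V g'V])
        also have "\<dots> = t * B g' r0 + B g' x0" using sy[OF r0V g'V] sy[OF x0V g'V] by simp
        also have "\<dots> = F g'" using orth[OF g'L] x0(2) g'L by simp
        finally show ?thesis .
      qed
      have "B \<psi> x = s * B r0 x + B g' x" unfolding pe by (rule bl[OF r0V g'V xV])
      also have "\<dots> = s * F r0 + F g'" using Br0x Bg'x by simp
      also have "\<dots> = F \<psi>" unfolding pe by (rule Flin[OF r0V g'V, symmetric])
      finally show "B \<psi> x = F \<psi>" .
    qed
  qed
qed

lemma lin_solve:
  fixes B :: "('a \<Rightarrow> real) \<Rightarrow> ('a \<Rightarrow> real) \<Rightarrow> real"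
  assumes fin0: "finite A0"
    and bl: "\<And>f g h r. f \<in> linI A0 \<phi> \<Longrightarrow> g \<in> linI A0 \<phi> \<Longrightarrow> h \<in> linI A0 \<phi> \<Longrightarrow> B (\<lambda>x. r * f x + g x) h = r * B f h + B g h"
    and sy: "\<And>f g. f \<in> linI A0 \<phi> \<Longrightarrow> g \<in> linI A0 \<phi> \<Longrightarrow> B f g = B g f"
    and pd: "\<And>f. f \<in> linI A0 \<phi> \<Longrightarrow> B f f = 0 \<Longrightarrow> f = (\<lambda>x. 0)"
    and Fl: "\<And>f g r. f \<in> linI A0 \<phi> \<Longrightarrow> g \<in> linI A0 \<phi> \<Longrightarrow> F (\<lambda>x. r * f x + g x) = r * F f + F g"
  shows "\<exists>x\<in>linI A0 \<phi>. \<forall>\<psi>\<in>linI A0 \<phi>. B \<psi> x = F \<psi>"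
  by (rule lin_solve_aux[where A0=A0 and \<phi>=\<phi> and B=B and A=A0 and F=F, OF fin0 bl sy pd fin0 order_refl Fl])


lemma lin_interp:
  "finite A \<Longrightarrow> \<exists>P \<Lambda>. finite P \<and> (\<forall>p\<in>P. \<Lambda> p \<in> linI A \<phi>) \<and> (\<forall>f\<in>linI A \<phi>. \<forall>x. f x = (\<Sum>p\<in>P. f p * \<Lambda> p x))"
proof (induction A rule: finite_induct)
  case empty
  show ?case by (rule exI[of _ "{}"], rule exI[of _ "\<lambda>p x. 0"]) (auto simp: linI_def)
next
  case (insert a A)
  let ?L = "linI A \<phi>" and ?L' = "linI (insert a A) \<phi>"
  obtain P \<Lambda> where P: "finite P" "\<forall>p\<in>P. \<Lambda> p \<in> ?L" "\<forall>f\<in>?L. \<forall>x. f x = (\<Sum>p\<in>P. f p * \<Lambda> p x)"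
    using insert.IH by blast
  have LL': "f \<in> ?L \<Longrightarrow> f \<in> ?L'" for f using insert.hyps by (intro linI_mono[of "insert a A" A]) auto
  have mL': "\<phi> a \<in> ?L'" using insert.hyps by (intro linI_gen) auto
  define Pm where "Pm = (\<lambda>x. \<Sum>p\<in>P. \<phi> a p * \<Lambda> p x)"
  have PmL: "Pm \<in> ?L" unfolding Pm_def using P by (intro linI_sum) auto
  define r0 where "r0 = (\<lambda>x. \<phi> a x - Pm x)"
  have r0L': "r0 \<in> ?L'" unfolding r0_def using mL' LL'[OF PmL] by (rule linI_diff)
  have Pi_lin: "(\<Sum>p\<in>P. (s * \<phi> a p + g p) * \<Lambda> p x) = s * Pm x + g x" if "g \<in> ?L" for s g x
  proof -
    have "(\<Sum>p\<in>P. (s * \<phi> a p + g p) * \<Lambda> p x) = s * Pm x + (\<Sum>p\<in>P. g p * \<Lambda> p x)"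
      unfolding Pm_def by (simp add: sum.distrib sum_distrib_left algebra_simps)
    also have "\<dots> = s * Pm x + g x" using P(3) that by simp
    finally show ?thesis .
  qed
  show ?case
  proof (cases "\<forall>x. r0 x = 0")
    case True
    then have "\<phi> a = Pm" unfolding r0_def by (auto simp: fun_eq_iff)
    then have mL: "\<phi> a \<in> ?L" using PmL by simp
    show ?thesis
    proof (intro exI[of _ P] exI[of _ \<Lambda>] conjI ballI allI)
      show "finite P" by (rule P(1))
      show "\<Lambda> p \<in> ?L'" if "p \<in> P" for p using P(2) that LL' by blast
      fix f x assume fL': "f \<in> ?L'"
      obtain s g where g: "g \<in> ?L" "f = (\<lambda>x. s * \<phi> a x + g x)"
        using linI_insert[OF insert.hyps(1) insert.hyps(2) fL'] by blast
      have "f \<in> ?L" unfolding g(2) using mL g(1) by (rule linI_lc)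
      then show "f x = (\<Sum>p\<in>P. f p * \<Lambda> p x)" using P(3) by blast
    qed
  next
    case False
    then obtain x0 where x0: "r0 x0 \<noteq> 0" by blast
    define \<Lambda>' where "\<Lambda>' = (\<lambda>p x. (if p \<in> P then \<Lambda> p x - \<Lambda> p x0 / r0 x0 * r0 x else 0) + (if p = x0 then r0 x / r0 x0 else 0))"
    show ?thesis
    proof (intro exI[of _ "insert x0 P"] exI[of _ \<Lambda>'] conjI ballI allI)
      show "finite (insert x0 P)" using P(1) by simp
      show "\<Lambda>' p \<in> ?L'" if "p \<in> insert x0 P" for p
      proof (cases "p \<in> P")
        case True
        have "\<Lambda>' p = (\<lambda>x. ((if p = x0 then 1 / r0 x0 else 0) - \<Lambda> p x0 / r0 x0) * r0 x + \<Lambda> p x)"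
          unfolding \<Lambda>'_def using True by (auto simp: fun_eq_iff algebra_simps)
        also have "\<dots> \<in> ?L'" using r0L' LL' P(2) True by (intro linI_lc) auto
        finally show ?thesis .
      next
        case False
        then have "p = x0" using that by simp
        then have "\<Lambda>' p = (\<lambda>x. (1 / r0 x0) * r0 x + 0)" unfolding \<Lambda>'_def using False by (auto simp: fun_eq_iff)
        also have "\<dots> \<in> ?L'" using r0L' linI_zero by (intro linI_lc) auto
        finally show ?thesis .
      qed
      fix f x assume fL': "f \<in> ?L'"
      obtain s g where g: "g \<in> ?L" "f = (\<lambda>x. s * \<phi> a x + g x)"
        using linI_insert[OF insert.hyps(1) insert.hyps(2) fL'] by blast
      have Pf: "(\<Sum>p\<in>P. f p * \<Lambda> p z) = s * Pm z + g z" for z unfolding g(2) using Pi_lin[OF g(1)] by simp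
      have "(\<Sum>p\<in>insert x0 P. f p * \<Lambda>' p x)
          = (\<Sum>p\<in>insert x0 P. (if p \<in> P then f p * (\<Lambda> p x - \<Lambda> p x0 / r0 x0 * r0 x) else 0))
            + (\<Sum>p\<in>insert x0 P. (if p = x0 then f p * (r0 x / r0 x0) else 0))"
        unfolding \<Lambda>'_def sum.distrib[symmetric] by (rule sum.cong) (auto simp: algebra_simps)
      also have "(\<Sum>p\<in>insert x0 P. (if p \<in> P then f p * (\<Lambda> p x - \<Lambda> p x0 / r0 x0 * r0 x) else 0))
          = (\<Sum>p\<in>P. f p * (\<Lambda> p x - \<Lambda> p x0 / r0 x0 * r0 x))"
        using P(1) by (intro sum.mono_neutral_cong_right) auto
      also have "\<dots> = (\<Sum>p\<in>P. f p * \<Lambda> p x - f p * \<Lambda> p x0 * (r0 x / r0 x0))"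
        by (rule sum.cong) (simp_all add: algebra_simps)
      also have "\<dots> = (\<Sum>p\<in>P. f p * \<Lambda> p x) - (\<Sum>p\<in>P. f p * \<Lambda> p x0) * (r0 x / r0 x0)"
        by (simp only: sum_subtractf sum_distrib_right)
      also have "(\<Sum>p\<in>insert x0 P. (if p = x0 then f p * (r0 x / r0 x0) else 0)) = f x0 * (r0 x / r0 x0)"
        using P(1) by (simp add: sum.delta)
      finally have "(\<Sum>p\<in>insert x0 P. f p * \<Lambda>' p x) =
          (s * Pm x + g x) - (s * Pm x0 + g x0) * (r0 x / r0 x0) + f x0 * (r0 x / r0 x0)"
        unfolding Pf .
      also have "\<dots> = (s * Pm x + g x) + (f x0 - (s * Pm x0 + g x0)) * (r0 x / r0 x0)"
        by (simp add: algebra_simps)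
      also have "f x0 - (s * Pm x0 + g x0) = s * r0 x0" unfolding g(2) r0_def by (simp add: algebra_simps)
      also have "(s * Pm x + g x) + s * r0 x0 * (r0 x / r0 x0) = s * Pm x + g x + s * r0 x"
        using x0 by simp
      also have "\<dots> = f x" unfolding g(2) r0_def by (simp add: algebra_simps)
      finally show "f x = (\<Sum>p\<in>insert x0 P. f p * \<Lambda>' p x)" by simp
    qed
  qed
qed


lemma ispoly_line: "ispoly f \<Longrightarrow> \<exists>P. \<forall>s. f (x + s *\<^sub>R d) = poly P s"
proof (induction rule: ispoly.induct)
  case (ip_const a) show ?case by (rule exI[of _ "[:a:]"]) simp
next
  case (ip_coord i) show ?case by (rule exI[of _ "[:x $ i, d $ i:]"]) (simp add: algebra_simps)
next
  case (ip_add f g)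
  then obtain P Q where "\<forall>s. f (x + s *\<^sub>R d) = poly P s" "\<forall>s. g (x + s *\<^sub>R d) = poly Q s" by blast
  then show ?case by (intro exI[of _ "P + Q"]) simp
next
  case (ip_mult f g)
  then obtain P Q where "\<forall>s. f (x + s *\<^sub>R d) = poly P s" "\<forall>s. g (x + s *\<^sub>R d) = poly Q s" by blast
  then show ?case by (intro exI[of _ "P * Q"]) simp
qed

lemma ispoly_zero_open:
  assumes f: "ispoly f" and U: "open U" "x0 \<in> U" and z: "\<And>x. x \<in> U \<Longrightarrow> f x = 0"
  shows "f y = 0"
proof -
  obtain e where e: "e > 0" "ball x0 e \<subseteq> U" using U open_contains_ball by blast
  define d where "d = y - x0"
  obtain P where P: "\<forall>s. f (x0 + s *\<^sub>R d) = poly P s" using ispoly_line[OF f] by blast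
  define \<delta> where "\<delta> = e / (norm d + 1)"
  have np: "norm d + 1 > 0" using norm_ge_zero[of d] by linarith
  have dpos: "\<delta> > 0" unfolding \<delta>_def by (rule divide_pos_pos[OF e(1) np])
  have sub: "{0..<\<delta>} \<subseteq> {s. poly P s = 0}"
  proof
    fix s assume s: "s \<in> {0..<\<delta>}"
    have "norm (s *\<^sub>R d) = s * norm d" using s by simp
    also have "\<dots> \<le> \<delta> * norm d" using s by (intro mult_right_mono) auto
    also have "\<dots> < e"
    proof -
      have "\<delta> * norm d = e * (norm d / (norm d + 1))" unfolding \<delta>_def by simp
      also have "\<dots> < e * 1" using e(1) np by (intro mult_strict_left_mono) (auto simp: divide_less_eq)
      finally show ?thesis by simp
    qed
    finally have "x0 + s *\<^sub>R d \<in> ball x0 e" by (simp add: dist_norm)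
    then have "f (x0 + s *\<^sub>R d) = 0" using e z by blast
    then show "s \<in> {s. poly P s = 0}" using P by simp
  qed
  have "P = 0"
  proof (rule ccontr)
    assume "P \<noteq> 0"
    then have "finite {s. poly P s = 0}" by (rule poly_roots_finite)
    then have "finite {0..<\<delta>}" using sub by (rule finite_subset[rotated])
    then show False using infinite_Ico[OF dpos] by blast
  qed
  moreover have "f (x0 + 1 *\<^sub>R d) = poly P 1" using P by blast
  ultimately have "f (x0 + 1 *\<^sub>R d) = 0" by simp
  then show ?thesis unfolding d_def by simp
qed

lemma ispoly_cont: "ispoly f \<Longrightarrow> continuous_on S f"
  by (intro continuous_at_imp_continuous_on ballI has_derivative_continuous[OF gradD])

lemma ispoly_meas: "ispoly f \<Longrightarrow> f \<in> borel_measurable borel"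
  by (intro borel_measurable_continuous_onI ispoly_cont)

lemma sint:
  assumes "bounded \<Omega>" "open \<Omega>" "ispoly f"
  shows "set_integrable lborel \<Omega> f"
proof -
  have "set_integrable lborel (closure \<Omega>) f"
    unfolding set_integrable_def
    by (rule borel_integrable_compact) (use assms in \<open>auto simp: compact_closure intro: ispoly_cont\<close>)
  then show ?thesis
    by (rule set_integrable_subset) (use assms in \<open>auto simp: closure_subset borel_open\<close>)
qed

lemma open_pos:
  assumes "open U" "U \<noteq> {}"
  shows "U \<notin> null_sets lborel"
proof
  assume "U \<in> null_sets lborel"
  then have "U \<in> null_sets lebesgue" by (rule null_sets_completionI)
  then have "negligible U" by (simp add: negligible_iff_null_sets)
  then show False using open_not_negligible assms by blast
qed

lemma int_zero_imp:
  assumes bo: "bounded \<Omega>" "open \<Omega>" and h: "ispoly h" and nn: "\<And>x. 0 \<le> h x"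
    and i0: "(LINT x:\<Omega>|lborel. h x) = 0" and x: "x \<in> \<Omega>"
  shows "h x = 0"
proof (rule ccontr)
  assume hx: "h x \<noteq> 0"
  have int: "integrable lborel (\<lambda>x. indicator \<Omega> x *\<^sub>R h x)"
    using sint[OF bo h] unfolding set_integrable_def .
  have "(LINT x|lborel. indicator \<Omega> x *\<^sub>R h x) = 0" using i0 unfolding set_lebesgue_integral_def .
  then have ae: "AE z in lborel. indicator \<Omega> z *\<^sub>R h z = 0"
    using integral_nonneg_eq_0_iff_AE[OF int] nn by (simp add: indicator_def)
  define U where "U = \<Omega> \<inter> {z. 0 < h z}"
  have oU: "open U" unfolding U_def using bo(2) h
    by (intro open_Int open_Collect_less continuous_on_const ispoly_cont) auto
  have xU: "x \<in> U" unfolding U_def using x hx nn[of x] by auto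
  have "AE z in lborel. z \<notin> U"
    using ae by eventually_elim (auto simp: U_def indicator_def)
  then have "U \<in> null_sets lborel"
    using AE_iff_null_sets[of U lborel] oU by (simp add: borel_open)
  then show False using open_pos[OF oU] xU by blast
qed

lemma ispoly_grad_zero_const:
  assumes "ispoly f" "\<And>x. grad f x = 0"
  shows "\<exists>c. \<forall>x. f x = c"
proof -
  have "\<And>x. (f has_derivative (\<lambda>h. 0)) (at x within UNIV)"
    using gradD[OF assms(1)] assms(2) by simp
  then show ?thesis using has_derivative_zero_constant[of UNIV f] by auto
qed


lemma Iadd: "bounded \<Omega> \<Longrightarrow> open \<Omega> \<Longrightarrow> ispoly f \<Longrightarrow> ispoly g \<Longrightarrow>
  (LINT x:\<Omega>|lborel. f x + g x) = (LINT x:\<Omega>|lborel. f x) + (LINT x:\<Omega>|lborel. g x)"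
  by (rule set_integral_add(2)) (simp_all add: sint)

lemma Idiff: "bounded \<Omega> \<Longrightarrow> open \<Omega> \<Longrightarrow> ispoly f \<Longrightarrow> ispoly g \<Longrightarrow>
  (LINT x:\<Omega>|lborel. f x - g x) = (LINT x:\<Omega>|lborel. f x) - (LINT x:\<Omega>|lborel. g x)"
  by (rule set_integral_diff(2)) (simp_all add: sint)

lemma Isum: assumes bo: "bounded \<Omega>" "open \<Omega>" shows "finite P \<Longrightarrow> (\<And>p. p \<in> P \<Longrightarrow> ispoly (f p)) \<Longrightarrow>
  (LINT x:\<Omega>|lborel. (\<Sum>p\<in>P. f p x)) = (\<Sum>p\<in>P. (LINT x:\<Omega>|lborel. f p x))"
proof (induction P rule: finite_induct)
  case empty then show ?case by (simp add: set_lebesgue_integral_def)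
next
  case (insert p P)
  have "(LINT x:\<Omega>|lborel. (\<Sum>p\<in>insert p P. f p x)) = (LINT x:\<Omega>|lborel. f p x + (\<Sum>p\<in>P. f p x))"
    using insert.hyps by simp
  also have "\<dots> = (LINT x:\<Omega>|lborel. f p x) + (LINT x:\<Omega>|lborel. (\<Sum>p\<in>P. f p x))"
    using insert bo by (intro Iadd ip_sum) auto
  finally show ?case using insert by simp
qed

lemma Imult: fixes f :: "'a::euclidean_space \<Rightarrow> real" shows "(LINT x:\<Omega>|lborel. a * f x) = a * (LINT x:\<Omega>|lborel. f x)"
  by (simp add: set_integral_mult_right)

definition sok :: "'a measure \<Rightarrow> ('a \<Rightarrow> real) \<Rightarrow> bool" where
  "sok S f \<longleftrightarrow> f \<in> borel_measurable S \<and> (\<exists>B. AE x in S. \<bar>f x\<bar> \<le> B)"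

lemma sok_int: "finite_measure S \<Longrightarrow> sok S f \<Longrightarrow> integrable S f"
proof -
  assume fm: "finite_measure S" and "sok S f"
  then obtain B where m: "f \<in> borel_measurable S" and b: "AE x in S. \<bar>f x\<bar> \<le> B" unfolding sok_def by blast
  have "AE x in S. norm (f x) \<le> B" using b by simp
  then show ?thesis using finite_measure.integrable_const_bound[OF fm _ m] by blast
qed

lemma sok_add: "sok S f \<Longrightarrow> sok S g \<Longrightarrow> sok S (\<lambda>x. f x + g x)"
proof -
  assume "sok S f" "sok S g"
  then obtain B1 B2 where m: "f \<in> borel_measurable S" "g \<in> borel_measurable S"
    and b: "AE x in S. \<bar>f x\<bar> \<le> B1" "AE x in S. \<bar>g x\<bar> \<le> B2" unfolding sok_def by blast
  have "AE x in S. \<bar>f x + g x\<bar> \<le> B1 + B2" using b by eventually_elim linarith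
  then show ?thesis using m unfolding sok_def by auto
qed

lemma sok_mult: "sok S f \<Longrightarrow> sok S g \<Longrightarrow> sok S (\<lambda>x. f x * g x)"
proof -
  assume "sok S f" "sok S g"
  then obtain B1 B2 where m: "f \<in> borel_measurable S" "g \<in> borel_measurable S"
    and b: "AE x in S. \<bar>f x\<bar> \<le> B1" "AE x in S. \<bar>g x\<bar> \<le> B2" unfolding sok_def by blast
  have "AE x in S. \<bar>f x * g x\<bar> \<le> B1 * B2" using b
  proof eventually_elim
    case (elim x)
    have "\<bar>f x\<bar> * \<bar>g x\<bar> \<le> B1 * B2" using elim by (intro mult_mono) auto
    then show ?case by (simp add: abs_mult)
  qed
  then show ?thesis using m unfolding sok_def by auto
qed

lemma sok_const: "sok S (\<lambda>x. a)"
  unfolding sok_def by auto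

lemma sok_diff: "sok S f \<Longrightarrow> sok S g \<Longrightarrow> sok S (\<lambda>x. f x - g x)"
proof -
  assume "sok S f" "sok S g"
  then have "sok S (\<lambda>x. f x + (-1) * g x)" by (intro sok_add sok_mult sok_const)
  then show ?thesis by simp
qed

lemma sok_sum: "finite P \<Longrightarrow> (\<And>p. p \<in> P \<Longrightarrow> sok S (f p)) \<Longrightarrow> sok S (\<lambda>x. \<Sum>p\<in>P. f p x)"
proof (induction P rule: finite_induct)
  case empty then show ?case using sok_const[of S 0] by simp
next
  case (insert p P) then show ?case by (simp add: sok_add)
qed

lemma meas_S:
  assumes "sets S = sets lborel" "f \<in> borel_measurable borel"
  shows "f \<in> borel_measurable S"
proof -
  have "borel_measurable S = borel_measurable lborel" by (rule measurable_cong_sets) (simp_all add: assms)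
  also have "\<dots> = borel_measurable borel" by (rule measurable_lborel2)
  finally have eq: "borel_measurable S = borel_measurable borel" .
  show ?thesis unfolding eq by (rule assms(2))
qed

lemma sok_poly:
  assumes "sets S = sets lborel" "AE x in S. x \<in> frontier \<Omega>" "bounded \<Omega>" "ispoly f"
  shows "sok S f"
proof -
  have "compact (f ` frontier \<Omega>)" using assms
    by (intro compact_continuous_image ispoly_cont compact_frontier_bounded)
  then obtain B where B: "\<forall>y\<in>f ` frontier \<Omega>. norm y \<le> B" using compact_imp_bounded bounded_iff by metis
  have "AE x in S. \<bar>f x\<bar> \<le> B" using assms(2) by eventually_elim (use B in auto)
  moreover have "f \<in> borel_measurable S" using meas_S[OF assms(1) ispoly_meas[OF assms(4)]] .
  ultimately show ?thesis unfolding sok_def by blast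
qed

lemma sok_bdd:
  assumes "f \<in> borel_measurable S" "bounded (f ` frontier \<Omega>)" "AE x in S. x \<in> frontier \<Omega>"
  shows "sok S f"
proof -
  obtain B where B: "\<forall>y\<in>f ` frontier \<Omega>. norm y \<le> B" using assms(2) bounded_iff by metis
  have "AE x in S. \<bar>f x\<bar> \<le> B" using assms(3) by eventually_elim (use B in auto)
  then show ?thesis using assms(1) unfolding sok_def by blast
qed

lemma meas_comp:
  fixes g :: "'a \<Rightarrow> real^'n"
  shows "g \<in> borel_measurable S \<Longrightarrow> (\<lambda>x. g x $ i) \<in> borel_measurable S"
proof -
  assume g: "g \<in> borel_measurable S"
  have "(\<lambda>x. g x \<bullet> axis i 1) \<in> borel_measurable S" using g by (intro borel_measurable_inner measurable_const) simp_all
  then show ?thesis by (simp add: inner_axis)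
qed

lemma sok_vec:
  fixes g :: "'a::topological_space \<Rightarrow> real^'n"
  assumes "g \<in> borel_measurable S" "bounded (g ` frontier \<Omega>)" "AE x in S. x \<in> frontier \<Omega>"
  shows "sok S (\<lambda>x. g x $ i)"
proof -
  obtain B where B: "\<forall>y\<in>g ` frontier \<Omega>. norm y \<le> B" using assms(2) bounded_iff by metis
  have "AE x in S. \<bar>g x $ i\<bar> \<le> B" using assms(3)
    by eventually_elim (use B component_le_norm_cart order_trans in fastforce)
  then show ?thesis using meas_comp[OF assms(1)] unfolding sok_def by blast
qed

lemma sok_nrm:
  fixes nrm :: "'a \<Rightarrow> real^'n"
  assumes "nrm \<in> borel_measurable S" "AE x in S. norm (nrm x) = 1"
  shows "sok S (\<lambda>x. nrm x $ i)"
proof -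
  have "AE x in S. \<bar>nrm x $ i\<bar> \<le> 1" using assms(2)
    by eventually_elim (use component_le_norm_cart in metis)
  then show ?thesis using meas_comp[OF assms(1)] unfolding sok_def by blast
qed

lemma sok_inner:
  fixes a b :: "'a \<Rightarrow> real^'n"
  assumes "\<And>i. sok S (\<lambda>x. a x $ i)" "\<And>i. sok S (\<lambda>x. b x $ i)"
  shows "sok S (\<lambda>x. a x \<bullet> b x)"
proof -
  have "sok S (\<lambda>x. \<Sum>i\<in>UNIV. a x $ i * b x $ i)" using assms by (intro sok_sum sok_mult) auto
  then show ?thesis by (simp add: inner_vec_def)
qed

lemma sok_cvec: "sok S (\<lambda>x. w $ i)"
  by (rule sok_const)

lemma Sadd: "finite_measure S \<Longrightarrow> sok S f \<Longrightarrow> sok S g \<Longrightarrow>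
   (LINT x|S. f x + g x) = (LINT x|S. f x) + (LINT x|S. g x)"
  by (rule Bochner_Integration.integral_add) (simp_all add: sok_int)

lemma Sdiff: "finite_measure S \<Longrightarrow> sok S f \<Longrightarrow> sok S g \<Longrightarrow>
   (LINT x|S. f x - g x) = (LINT x|S. f x) - (LINT x|S. g x)"
  by (rule Bochner_Integration.integral_diff) (simp_all add: sok_int)

lemma Ssum: "finite_measure S \<Longrightarrow> finite P \<Longrightarrow> (\<And>p. p \<in> P \<Longrightarrow> sok S (f p)) \<Longrightarrow>
   (LINT x|S. (\<Sum>p\<in>P. f p x)) = (\<Sum>p\<in>P. (LINT x|S. f p x))"
  by (rule Bochner_Integration.integral_sum) (simp_all add: sok_int)

lemma ip_inner_grad: "ispoly f \<Longrightarrow> ispoly g \<Longrightarrow> ispoly (\<lambda>x. grad f x \<bullet> grad g x)"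
proof -
  assume "ispoly f" "ispoly g"
  then have "ispoly (\<lambda>x. \<Sum>i\<in>UNIV. grad f x $ i * grad g x $ i)" by (intro ip_sum ip_mult ip_grad) auto
  then show ?thesis by (simp add: inner_vec_def)
qed

lemma ip_w_grad: "ispoly f \<Longrightarrow> ispoly (\<lambda>x. w \<bullet> grad f x)"
proof -
  assume "ispoly f"
  then have "ispoly (\<lambda>x. \<Sum>i\<in>UNIV. w $ i * grad f x $ i)" by (intro ip_sum ip_scale ip_grad) auto
  then show ?thesis by (simp add: inner_vec_def)
qed

lemma grad_w_grad: "ispoly f \<Longrightarrow> grad (\<lambda>x. w \<bullet> grad f x) x = (\<Sum>i\<in>UNIV. w $ i *\<^sub>R grad (\<lambda>x. grad f x $ i) x)"
proof -
  assume f: "ispoly f"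
  have e: "(\<lambda>x. w \<bullet> grad f x) = (\<lambda>x. \<Sum>i\<in>UNIV. w $ i * grad f x $ i)" by (simp add: inner_vec_def)
  show ?thesis unfolding e using f by (simp add: grad_sum grad_scale ip_scale ip_grad)
qed

lemma grad_fd: "frechet_derivative g (at x) (axis i 1) = grad g x $ i"
  by (simp add: grad_def)


lemma lin_unique:
  fixes B :: "('a \<Rightarrow> real) \<Rightarrow> ('a \<Rightarrow> real) \<Rightarrow> real"
  assumes bl: "\<And>f g h r. f \<in> V \<Longrightarrow> g \<in> V \<Longrightarrow> h \<in> V \<Longrightarrow> B (\<lambda>x. r * f x + g x) h = r * B f h + B g h"
    and sy: "\<And>f g. f \<in> V \<Longrightarrow> g \<in> V \<Longrightarrow> B f g = B g f"
    and pd: "\<And>f. f \<in> V \<Longrightarrow> B f f = 0 \<Longrightarrow> f = (\<lambda>x. 0)"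
    and lc: "\<And>f g r. f \<in> V \<Longrightarrow> g \<in> V \<Longrightarrow> (\<lambda>x. r * f x + g x) \<in> V"
    and x: "x \<in> V" "x' \<in> V" and eq: "\<And>\<psi>. \<psi> \<in> V \<Longrightarrow> B \<psi> x = B \<psi> x'"
  shows "x = x'"
proof -
  define d where "d = (\<lambda>z. (-1) * x' z + x z)"
  have dV: "d \<in> V" unfolding d_def by (rule lc[OF x(2) x(1)])
  have "B d d = (-1) * B x' d + B x d" unfolding d_def by (rule bl[OF x(2) x(1) dV[unfolded d_def]])
  also have "\<dots> = (-1) * B d x' + B d x" using sy[OF x(2) dV] sy[OF x(1) dV] by simp
  also have "\<dots> = 0" using eq[OF dV] by simp
  finally have "d = (\<lambda>z. 0)" using pd[OF dV] by blast
  then show ?thesis unfolding d_def by (simp add: fun_eq_iff)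
qed

lemma Inonneg:
  fixes h :: "'a::euclidean_space \<Rightarrow> real"
  assumes "\<And>x. 0 \<le> h x" shows "0 \<le> (LINT x:\<Omega>|lborel. h x)"
  unfolding set_lebesgue_integral_def by (rule Bochner_Integration.integral_nonneg) (simp add: indicator_def assms)

lemma grad_lc: "ispoly f \<Longrightarrow> ispoly g \<Longrightarrow> grad (\<lambda>x. r * f x + g x) x = r *\<^sub>R grad f x + grad g x"
  by (simp add: grad_add grad_scale ip_scale)

lemma ip_lc: "ispoly f \<Longrightarrow> ispoly g \<Longrightarrow> ispoly (\<lambda>x. r * f x + g x)"
  by (intro ip_add ip_scale)

lemma polys_one: "(\<lambda>x. 1) \<in> polys q"
  using polys_mono[OF _ polys_const] by blast

locale dgctx =
  fixes \<Omega> :: "(real^'n::finite) set" and S :: "(real^'n) measure" and nrm :: "real^'n \<Rightarrow> real^'n"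
  assumes bo: "bounded \<Omega>" and op: "open \<Omega>" and ne: "\<Omega> \<noteq> {}" and sS: "sets S = sets lborel"
    and fm: "finite_measure S" and ae: "AE x in S. x \<in> frontier \<Omega>" and nm: "nrm \<in> borel_measurable S"
    and nn: "AE x in S. norm (nrm x) = 1"
    and dv: "\<And>g k i. g \<in> polys k \<Longrightarrow>
        (LINT x:\<Omega>|lborel. frechet_derivative g (at x) (axis i 1)) = (LINT x|S. g x * (nrm x $ i))"
begin

lemma sokP: "ispoly f \<Longrightarrow> sok S f"
  by (rule sok_poly[OF sS ae bo])

lemma sokG: "ispoly f \<Longrightarrow> sok S (\<lambda>x. grad f x $ i)"
  by (intro sokP ip_grad)

lemma sokN: "sok S (\<lambda>x. nrm x $ i)"
  by (rule sok_nrm[OF nm nn])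

lemma sok_wn: "sok S (\<lambda>x. w \<bullet> nrm x)"
  by (intro sok_inner sok_const sokN)

lemma sok_gn: "ispoly f \<Longrightarrow> sok S (\<lambda>x. grad f x \<bullet> nrm x)"
  by (intro sok_inner sokG sokN)

lemma div_ip: "ispoly g \<Longrightarrow> (LINT x:\<Omega>|lborel. grad g x $ i) = (LINT x|S. g x * (nrm x $ i))"
proof -
  assume "ispoly g"
  then obtain k where "g \<in> polys k" using ispoly_polys by blast
  from dv[OF this, of i] show ?thesis by (simp add: grad_fd)
qed

lemma M_nz: "(LINT x:\<Omega>|lborel. (1::real)) \<noteq> 0"
proof
  assume h: "(LINT x:\<Omega>|lborel. (1::real)) = 0"
  obtain x where x: "x \<in> \<Omega>" using ne by blast
  have "(\<lambda>x::real^'n. 1::real) x = 0" by (rule int_zero_imp[OF bo op ip_const _ h x]) simp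
  then show False by simp
qed

lemma Iconst: "(LINT x:\<Omega>|lborel. (a::real)) = a * (LINT x:\<Omega>|lborel. (1::real))"
  using Imult[where a=a and f="\<lambda>x. 1" and \<Omega>=\<Omega>] by simp

lemma IaddP: "ispoly f \<Longrightarrow> ispoly g \<Longrightarrow>
  (LINT x:\<Omega>|lborel. f x + g x) = (LINT x:\<Omega>|lborel. f x) + (LINT x:\<Omega>|lborel. g x)"
  by (rule Iadd[OF bo op])

lemma IdiffP: "ispoly f \<Longrightarrow> ispoly g \<Longrightarrow>
  (LINT x:\<Omega>|lborel. f x - g x) = (LINT x:\<Omega>|lborel. f x) - (LINT x:\<Omega>|lborel. g x)"
  by (rule Idiff[OF bo op])

lemma Ilc: "ispoly f \<Longrightarrow> ispoly g \<Longrightarrow>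
  (LINT x:\<Omega>|lborel. r * f x + g x) = r * (LINT x:\<Omega>|lborel. f x) + (LINT x:\<Omega>|lborel. g x)"
  by (simp add: IaddP ip_scale Imult)

lemma SaddP: "sok S f \<Longrightarrow> sok S g \<Longrightarrow> (LINT x|S. f x + g x) = (LINT x|S. f x) + (LINT x|S. g x)"
  by (rule Sadd[OF fm])

lemma SdiffP: "sok S f \<Longrightarrow> sok S g \<Longrightarrow> (LINT x|S. f x - g x) = (LINT x|S. f x) - (LINT x|S. g x)"
  by (rule Sdiff[OF fm])

lemma Slc: "sok S f \<Longrightarrow> sok S g \<Longrightarrow> (LINT x|S. r * f x + g x) = r * (LINT x|S. f x) + (LINT x|S. g x)"
  by (simp add: SaddP sok_mult sok_const)

lemma pd_grad:
  assumes \<psi>: "ispoly \<psi>" and z: "(LINT x:\<Omega>|lborel. grad \<psi> x \<bullet> grad \<psi> x) = 0"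
    and m: "(LINT x:\<Omega>|lborel. \<psi> x) = 0"
  shows "\<psi> = (\<lambda>x. 0)"
proof -
  obtain x0 where x0: "x0 \<in> \<Omega>" using ne by blast
  have g0: "grad \<psi> x \<bullet> grad \<psi> x = 0" if "x \<in> \<Omega>" for x
    by (rule int_zero_imp[OF bo op ip_inner_grad[OF \<psi> \<psi>] _ z that]) simp
  have gc: "grad \<psi> y $ i = 0" for y i
  proof (rule ispoly_zero_open[OF ip_grad[OF \<psi>] op x0])
    fix x assume "x \<in> \<Omega>"
    then have "grad \<psi> x = 0" using g0 by simp
    then show "grad \<psi> x $ i = 0" by simp
  qed
  have "\<And>y. grad \<psi> y = 0" using gc by (simp add: vec_eq_iff)
  then obtain C where C: "\<forall>x. \<psi> x = C" using ispoly_grad_zero_const[OF \<psi>] by blast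
  then have "\<psi> = (\<lambda>x. C)" by auto
  then have "C * (LINT x:\<Omega>|lborel. (1::real)) = 0" using m Iconst[of C] by simp
  then have "C = 0" using M_nz by simp
  then show ?thesis using C by auto
qed

lemma pd_L2:
  assumes \<psi>: "ispoly \<psi>" and z: "(LINT x:\<Omega>|lborel. \<psi> x * \<psi> x) = 0"
  shows "\<psi> = (\<lambda>x. 0)"
proof -
  obtain x0 where x0: "x0 \<in> \<Omega>" using ne by blast
  have g0: "\<psi> x * \<psi> x = 0" if "x \<in> \<Omega>" for x
    by (rule int_zero_imp[OF bo op ip_mult[OF \<psi> \<psi>] _ z that]) simp
  have "\<psi> y = 0" for y
    by (rule ispoly_zero_open[OF \<psi> op x0]) (use g0 in simp)
  then show ?thesis by auto
qed

end


context dgctx begin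

lemma Vlc: "f \<in> polys q \<Longrightarrow> g \<in> polys q \<Longrightarrow> (\<lambda>x. r * f x + g x) \<in> polys q"
  unfolding polys_linI by (rule linI_lc)

lemma IG_lin: "ispoly f \<Longrightarrow> ispoly g \<Longrightarrow> ispoly \<psi> \<Longrightarrow>
  (LINT x:\<Omega>|lborel. grad (\<lambda>x. r * f x + g x) x \<bullet> grad \<psi> x)
   = r * (LINT x:\<Omega>|lborel. grad f x \<bullet> grad \<psi> x) + (LINT x:\<Omega>|lborel. grad g x \<bullet> grad \<psi> x)"
proof -
  assume f: "ispoly f" and g: "ispoly g" and p: "ispoly \<psi>"
  have "(\<lambda>x. grad (\<lambda>x. r * f x + g x) x \<bullet> grad \<psi> x) = (\<lambda>x. r * (grad f x \<bullet> grad \<psi> x) + grad g x \<bullet> grad \<psi> x)"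
    using f g by (simp add: fun_eq_iff grad_lc inner_add_left)
  then show ?thesis using f g p by (simp add: Ilc ip_inner_grad)
qed

lemma I_lin: "ispoly f \<Longrightarrow> ispoly g \<Longrightarrow>
  (LINT x:\<Omega>|lborel. r * f x + g x) = r * (LINT x:\<Omega>|lborel. f x) + (LINT x:\<Omega>|lborel. g x)"
  by (rule Ilc)

lemma ut_part:
  assumes u: "ispoly u" and v: "ispoly v" and fl: "flux_ok \<Omega> S vs gs" and c: "c > 0"
  shows "\<exists>!ut. ut \<in> polys q \<and>
     (\<forall>\<phi>\<in>polys q.
        (LINT x:\<Omega>|lborel. c\<^sup>2 * (grad \<phi> x \<bullet> grad (\<lambda>y. ut y + w \<bullet> grad u y - v y) x))
        = (LINT x|S. c\<^sup>2 * (vs x - v x) * (grad \<phi> x \<bullet> nrm x)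
                     - c\<^sup>2 * (grad \<phi> x \<bullet> (gs x - grad u x)) * (w \<bullet> nrm x))) \<and>
     (\<forall>k::real. (LINT x:\<Omega>|lborel. k * (ut x + w \<bullet> grad u x - v x)) = 0)"
    (is "\<exists>!ut. ut \<in> polys q \<and> ?S1 ut \<and> ?S3 ut")
proof -
  let ?V = "polys q :: (real^'n \<Rightarrow> real) set"
  have VP: "\<phi> \<in> ?V \<Longrightarrow> ispoly \<phi>" for \<phi> by (rule polys_ispoly)
  define h where "h = (\<lambda>y. w \<bullet> grad u y - v y)"
  have hp: "ispoly h" unfolding h_def using u v by (intro ip_minus ip_w_grad)
  have vsok: "sok S vs" using fl ae unfolding flux_ok_def by (intro sok_bdd) auto
  have gsok: "sok S (\<lambda>x. gs x $ i)" for i using fl ae unfolding flux_ok_def by (intro sok_vec) auto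
  define I where "I = (\<lambda>\<phi> x. c\<^sup>2 * (vs x - v x) * (grad \<phi> x \<bullet> nrm x)
                     - c\<^sup>2 * (grad \<phi> x \<bullet> (gs x - grad u x)) * (w \<bullet> nrm x))"
  have sokI: "sok S (I \<phi>)" if "ispoly \<phi>" for \<phi> :: "real^'n \<Rightarrow> real"
  proof -
    have c1: "sok S (\<lambda>x. (gs x - grad u x) $ i)" for i
      by (simp only: vector_minus_component) (intro sok_diff gsok sokG u)
    show ?thesis unfolding I_def
      by (intro sok_diff sok_mult sok_const vsok sokP v sok_gn that sok_wn sok_inner sokG c1)
  qed
  define f1 where "f1 = (\<lambda>\<phi>. LINT x|S. I \<phi> x)"
  have f1_lin: "f1 (\<lambda>x. r * \<phi>1 x + \<phi>2 x) = r * f1 \<phi>1 + f1 \<phi>2" if "ispoly \<phi>1" "ispoly \<phi>2"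
    for r and \<phi>1 \<phi>2 :: "real^'n \<Rightarrow> real"
  proof -
    have gl: "grad (\<lambda>x. r * \<phi>1 x + \<phi>2 x) = (\<lambda>x. r *\<^sub>R grad \<phi>1 x + grad \<phi>2 x)"
      using that by (simp add: fun_eq_iff grad_lc)
    have "I (\<lambda>x. r * \<phi>1 x + \<phi>2 x) = (\<lambda>x. r * I \<phi>1 x + I \<phi>2 x)"
      unfolding I_def gl by (simp add: fun_eq_iff inner_add_left algebra_simps)
    then show ?thesis unfolding f1_def using that by (simp add: Slc sokI)
  qed
  have f1_one: "f1 (\<lambda>x. 1) = 0" unfolding f1_def I_def by (simp add: grad_const)
  define B1 where "B1 = (\<lambda>\<phi> \<psi>. (LINT x:\<Omega>|lborel. grad \<phi> x \<bullet> grad \<psi> x) + (LINT x:\<Omega>|lborel. \<phi> x) * (LINT x:\<Omega>|lborel. \<psi> x))"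
  define F1 where "F1 = (\<lambda>\<phi>. f1 \<phi> / c\<^sup>2 - (LINT x:\<Omega>|lborel. grad \<phi> x \<bullet> grad h x) - (LINT x:\<Omega>|lborel. \<phi> x) * (LINT x:\<Omega>|lborel. h x))"
  have bl: "B1 (\<lambda>x. r * f x + g x) k = r * B1 f k + B1 g k" if "f \<in> ?V" "g \<in> ?V" "k \<in> ?V" for f g k r
    unfolding B1_def IG_lin[OF VP[OF that(1)] VP[OF that(2)] VP[OF that(3)]] I_lin[OF VP[OF that(1)] VP[OF that(2)]]
    by (simp add: algebra_simps)
  have sy: "B1 f g = B1 g f" for f g unfolding B1_def by (simp add: inner_commute mult.commute)
  have pd: "f = (\<lambda>x. 0)" if "f \<in> ?V" "B1 f f = 0" for f
  proof -
    have n1: "0 \<le> (LINT x:\<Omega>|lborel. grad f x \<bullet> grad f x)" by (rule Inonneg) simp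
    have n2: "0 \<le> (LINT x:\<Omega>|lborel. f x) * (LINT x:\<Omega>|lborel. f x)" by simp
    have "(LINT x:\<Omega>|lborel. grad f x \<bullet> grad f x) = 0" "(LINT x:\<Omega>|lborel. f x) * (LINT x:\<Omega>|lborel. f x) = 0"
      using that(2) n1 n2 unfolding B1_def by linarith+
    then show ?thesis using pd_grad[OF VP[OF that(1)]] by simp
  qed
  have Fl: "F1 (\<lambda>x. r * f x + g x) = r * F1 f + F1 g" if "f \<in> ?V" "g \<in> ?V" for f g r
    unfolding F1_def f1_lin[OF VP[OF that(1)] VP[OF that(2)]] IG_lin[OF VP[OF that(1)] VP[OF that(2)] hp] I_lin[OF VP[OF that(1)] VP[OF that(2)]]
    by (simp add: algebra_simps diff_divide_distrib add_divide_distrib)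
  have gradsum: "grad (\<lambda>y. ut y + w \<bullet> grad u y - v y) x = grad ut x + grad h x" if "ispoly ut" for ut x
    unfolding h_def using that u v
    by (simp add: grad_minus grad_add ip_add ip_w_grad)
  have key1: "(LINT x:\<Omega>|lborel. c\<^sup>2 * (grad \<phi> x \<bullet> grad (\<lambda>y. ut y + w \<bullet> grad u y - v y) x))
      = c\<^sup>2 * ((LINT x:\<Omega>|lborel. grad \<phi> x \<bullet> grad ut x) + (LINT x:\<Omega>|lborel. grad \<phi> x \<bullet> grad h x))"
    if "ispoly \<phi>" "ispoly ut" for \<phi> ut
    using that hp by (simp add: gradsum inner_add_right Imult IaddP ip_inner_grad)
  have key3: "(LINT x:\<Omega>|lborel. k * (ut x + w \<bullet> grad u x - v x)) = k * ((LINT x:\<Omega>|lborel. ut x) + (LINT x:\<Omega>|lborel. h x))"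
    if "ispoly ut" for ut k
  proof -
    have "(\<lambda>x. k * (ut x + w \<bullet> grad u x - v x)) = (\<lambda>x. k * (ut x + h x))" unfolding h_def by (simp add: algebra_simps)
    then show ?thesis using that hp by (simp add: Imult IaddP)
  qed
  have M: "(LINT x:\<Omega>|lborel. (1::real)) \<noteq> 0" by (rule M_nz)
  have equiv: "(?S1 ut \<and> ?S3 ut) \<longleftrightarrow> (\<forall>\<psi>\<in>?V. B1 \<psi> ut = F1 \<psi>)" if ut: "ut \<in> ?V" for ut
  proof
    assume A: "?S1 ut \<and> ?S3 ut"
    have a3: "(LINT x:\<Omega>|lborel. 1 * (ut x + w \<bullet> grad u x - v x)) = 0" using A by blast
    have m0: "(LINT x:\<Omega>|lborel. ut x) + (LINT x:\<Omega>|lborel. h x) = 0"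
      using a3 key3[OF VP[OF ut], of 1] by simp
    have e1: "c\<^sup>2 * ((LINT x:\<Omega>|lborel. grad \<psi> x \<bullet> grad ut x) + (LINT x:\<Omega>|lborel. grad \<psi> x \<bullet> grad h x)) = f1 \<psi>"
      if "\<psi> \<in> ?V" for \<psi>
    proof -
      have "(LINT x:\<Omega>|lborel. c\<^sup>2 * (grad \<psi> x \<bullet> grad (\<lambda>y. ut y + w \<bullet> grad u y - v y) x)) = f1 \<psi>"
        using A that unfolding f1_def I_def by blast
      then show ?thesis using key1[OF VP[OF that] VP[OF ut]] by simp
    qed
    show "\<forall>\<psi>\<in>?V. B1 \<psi> ut = F1 \<psi>"
    proof
      fix \<psi> assume p: "\<psi> \<in> ?V"
      have e2: "(LINT x:\<Omega>|lborel. grad \<psi> x \<bullet> grad ut x) = f1 \<psi> / c\<^sup>2 - (LINT x:\<Omega>|lborel. grad \<psi> x \<bullet> grad h x)"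
        using e1[OF p] c by (simp add: field_simps)
      have e3: "(LINT x:\<Omega>|lborel. ut x) = - (LINT x:\<Omega>|lborel. h x)" using m0 by simp
      show "B1 \<psi> ut = F1 \<psi>" unfolding B1_def F1_def e2 e3 by simp
    qed
  next
    assume A: "\<forall>\<psi>\<in>?V. B1 \<psi> ut = F1 \<psi>"
    have "B1 (\<lambda>x. 1) ut = F1 (\<lambda>x. 1)" using A polys_one by blast
    then have "(LINT x:\<Omega>|lborel. (1::real)) * ((LINT x:\<Omega>|lborel. ut x) + (LINT x:\<Omega>|lborel. h x)) = 0"
      unfolding B1_def F1_def f1_one by (simp add: grad_const algebra_simps)
    then have m0: "(LINT x:\<Omega>|lborel. ut x) + (LINT x:\<Omega>|lborel. h x) = 0" using M by simp
    show "?S1 ut \<and> ?S3 ut"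
    proof
      show "?S3 ut" using key3[OF VP[OF ut]] m0 by simp
      show "?S1 ut"
      proof
        fix \<phi> assume p: "\<phi> \<in> ?V"
        have e3: "(LINT x:\<Omega>|lborel. ut x) = - (LINT x:\<Omega>|lborel. h x)" using m0 by simp
        have "B1 \<phi> ut = F1 \<phi>" using A p by blast
        then have "(LINT x:\<Omega>|lborel. grad \<phi> x \<bullet> grad ut x) + (LINT x:\<Omega>|lborel. grad \<phi> x \<bullet> grad h x) = f1 \<phi> / c\<^sup>2"
          unfolding B1_def F1_def e3 by (simp add: algebra_simps)
        then have "(LINT x:\<Omega>|lborel. c\<^sup>2 * (grad \<phi> x \<bullet> grad (\<lambda>y. ut y + w \<bullet> grad u y - v y) x)) = f1 \<phi>"
          using key1[OF VP[OF p] VP[OF ut]] c by (simp add: field_simps)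
        then show "(LINT x:\<Omega>|lborel. c\<^sup>2 * (grad \<phi> x \<bullet> grad (\<lambda>y. ut y + w \<bullet> grad u y - v y) x))
          = (LINT x|S. c\<^sup>2 * (vs x - v x) * (grad \<phi> x \<bullet> nrm x)
                     - c\<^sup>2 * (grad \<phi> x \<bullet> (gs x - grad u x)) * (w \<bullet> nrm x))"
          unfolding f1_def I_def .
      qed
    qed
  qed
  obtain ut0 where ut0: "ut0 \<in> ?V" "\<forall>\<psi>\<in>?V. B1 \<psi> ut0 = F1 \<psi>"
    using lin_solve[of "multi_idx q" monomial_fn B1 F1] finite_multi_idx bl sy pd Fl
    unfolding polys_linI by blast
  show ?thesis
  proof (rule ex1I[of _ ut0])
    show "ut0 \<in> ?V \<and> ?S1 ut0 \<and> ?S3 ut0" using ut0 equiv[OF ut0(1)] unfolding I_def by simp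
  next
    fix ut assume "ut \<in> ?V \<and> ?S1 ut \<and> ?S3 ut"
    then have ut: "ut \<in> ?V" "\<forall>\<psi>\<in>?V. B1 \<psi> ut = F1 \<psi>" using equiv unfolding I_def by auto
    show "ut = ut0"
      by (rule lin_unique[of ?V B1]) (use bl sy pd Vlc ut ut0 in auto)
  qed
qed

end


context dgctx begin

lemma vt_part:
  assumes u: "ispoly u" and v: "ispoly v" and fl: "flux_ok \<Omega> S vs gs"
  shows "\<exists>!vt. vt \<in> polys s \<and>
     (\<forall>\<phi>\<in>polys s.
        (LINT x:\<Omega>|lborel. \<phi> x * vt x + \<phi> x * (w \<bullet> grad v x) + c\<^sup>2 * (grad u x \<bullet> grad \<phi> x))
        = (LINT x|S. c\<^sup>2 * \<phi> x * (gs x \<bullet> nrm x) - (vs x - v x) * \<phi> x * (w \<bullet> nrm x)))"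
    (is "\<exists>!vt. vt \<in> polys s \<and> ?S2 vt")
proof -
  let ?V = "polys s :: (real^'n \<Rightarrow> real) set"
  have VP: "\<phi> \<in> ?V \<Longrightarrow> ispoly \<phi>" for \<phi> by (rule polys_ispoly)
  have vsok: "sok S vs" using fl ae unfolding flux_ok_def by (intro sok_bdd) auto
  have gsok: "sok S (\<lambda>x. gs x $ i)" for i using fl ae unfolding flux_ok_def by (intro sok_vec) auto
  define J where "J = (\<lambda>\<phi> x. c\<^sup>2 * \<phi> x * (gs x \<bullet> nrm x) - (vs x - v x) * \<phi> x * (w \<bullet> nrm x))"
  have sokJ: "sok S (J \<phi>)" if "ispoly \<phi>" for \<phi> :: "real^'n \<Rightarrow> real"
    unfolding J_def by (intro sok_diff sok_mult sok_const vsok sokP v that sok_wn sok_inner gsok sokN)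
  define f2 where "f2 = (\<lambda>\<phi>. LINT x|S. J \<phi> x)"
  have f2_lin: "f2 (\<lambda>x. r * \<phi>1 x + \<phi>2 x) = r * f2 \<phi>1 + f2 \<phi>2" if "ispoly \<phi>1" "ispoly \<phi>2"
    for r and \<phi>1 \<phi>2 :: "real^'n \<Rightarrow> real"
  proof -
    have "J (\<lambda>x. r * \<phi>1 x + \<phi>2 x) = (\<lambda>x. r * J \<phi>1 x + J \<phi>2 x)"
      unfolding J_def by (simp add: fun_eq_iff algebra_simps)
    then show ?thesis unfolding f2_def using that by (simp add: Slc sokJ)
  qed
  define B2 where "B2 = (\<lambda>\<phi> \<psi> :: real^'n \<Rightarrow> real. LINT x:\<Omega>|lborel. \<phi> x * \<psi> x)"
  define F2 where "F2 = (\<lambda>\<phi>. f2 \<phi> - (LINT x:\<Omega>|lborel. \<phi> x * (w \<bullet> grad v x)) - (LINT x:\<Omega>|lborel. c\<^sup>2 * (grad u x \<bullet> grad \<phi> x)))"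
  have ipw: "ispoly (\<lambda>x. w \<bullet> grad v x)" using v by (rule ip_w_grad)
  have bl: "B2 (\<lambda>x. r * f x + g x) k = r * B2 f k + B2 g k" if "f \<in> ?V" "g \<in> ?V" "k \<in> ?V" for f g k r
  proof -
    have "(\<lambda>x. (r * f x + g x) * k x) = (\<lambda>x. r * (f x * k x) + g x * k x)" by (simp add: fun_eq_iff algebra_simps)
    then show ?thesis unfolding B2_def using VP[OF that(1)] VP[OF that(2)] VP[OF that(3)]
      by (simp add: Ilc ip_mult)
  qed
  have sy: "B2 f g = B2 g f" for f g unfolding B2_def by (simp add: mult.commute)
  have pd: "f = (\<lambda>x. 0)" if "f \<in> ?V" "B2 f f = 0" for f
    using pd_L2[OF VP[OF that(1)]] that(2) unfolding B2_def by simp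
  have Fl: "F2 (\<lambda>x. r * f x + g x) = r * F2 f + F2 g" if "f \<in> ?V" "g \<in> ?V" for f g r
  proof -
    have f: "ispoly f" and g: "ispoly g" using VP that by auto
    have gl: "grad (\<lambda>x. r * f x + g x) = (\<lambda>x. r *\<^sub>R grad f x + grad g x)"
      using f g by (simp add: fun_eq_iff grad_lc)
    have e1: "(\<lambda>x. (r * f x + g x) * (w \<bullet> grad v x)) = (\<lambda>x. r * (f x * (w \<bullet> grad v x)) + g x * (w \<bullet> grad v x))"
      by (simp add: fun_eq_iff algebra_simps)
    have e2: "(\<lambda>x. c\<^sup>2 * (grad u x \<bullet> (r *\<^sub>R grad f x + grad g x))) = (\<lambda>x. r * (c\<^sup>2 * (grad u x \<bullet> grad f x)) + c\<^sup>2 * (grad u x \<bullet> grad g x))"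
      by (simp add: fun_eq_iff algebra_simps inner_add_right)
    have p1: "ispoly (\<lambda>x. c\<^sup>2 * (grad u x \<bullet> grad f x))" "ispoly (\<lambda>x. c\<^sup>2 * (grad u x \<bullet> grad g x))"
      using u f g by (auto intro: ip_scale ip_inner_grad)
    show ?thesis unfolding F2_def f2_lin[OF f g] gl e1 e2 Ilc[OF ip_mult[OF f ipw] ip_mult[OF g ipw]] Ilc[OF p1]
      by (simp add: algebra_simps)
  qed
  have split: "(LINT x:\<Omega>|lborel. \<phi> x * vt x + \<phi> x * (w \<bullet> grad v x) + c\<^sup>2 * (grad u x \<bullet> grad \<phi> x))
     = B2 \<phi> vt + (LINT x:\<Omega>|lborel. \<phi> x * (w \<bullet> grad v x)) + (LINT x:\<Omega>|lborel. c\<^sup>2 * (grad u x \<bullet> grad \<phi> x))"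
    if "ispoly \<phi>" "ispoly vt" for \<phi> vt
  proof -
    have p: "ispoly (\<lambda>x. \<phi> x * vt x)" "ispoly (\<lambda>x. \<phi> x * (w \<bullet> grad v x))" "ispoly (\<lambda>x. c\<^sup>2 * (grad u x \<bullet> grad \<phi> x))"
      using that u ipw by (auto intro: ip_mult ip_scale ip_inner_grad)
    show ?thesis unfolding B2_def using p by (simp add: IaddP ip_add)
  qed
  have equiv: "?S2 vt \<longleftrightarrow> (\<forall>\<psi>\<in>?V. B2 \<psi> vt = F2 \<psi>)" if vt: "vt \<in> ?V" for vt
  proof -
    have "?S2 vt \<longleftrightarrow> (\<forall>\<phi>\<in>?V. B2 \<phi> vt + (LINT x:\<Omega>|lborel. \<phi> x * (w \<bullet> grad v x)) + (LINT x:\<Omega>|lborel. c\<^sup>2 * (grad u x \<bullet> grad \<phi> x)) = f2 \<phi>)"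
      unfolding f2_def J_def using split VP vt by auto
    also have "\<dots> \<longleftrightarrow> (\<forall>\<psi>\<in>?V. B2 \<psi> vt = F2 \<psi>)" unfolding F2_def by (auto simp: algebra_simps)
    finally show ?thesis .
  qed
  obtain vt0 where vt0: "vt0 \<in> ?V" "\<forall>\<psi>\<in>?V. B2 \<psi> vt0 = F2 \<psi>"
    using lin_solve[of "multi_idx s" monomial_fn B2 F2] finite_multi_idx bl sy pd Fl
    unfolding polys_linI by blast
  show ?thesis
  proof (rule ex1I[of _ vt0])
    show "vt0 \<in> ?V \<and> ?S2 vt0" using vt0 equiv[OF vt0(1)] by simp
  next
    fix vt assume "vt \<in> ?V \<and> ?S2 vt"
    then have vt: "vt \<in> ?V" "\<forall>\<psi>\<in>?V. B2 \<psi> vt = F2 \<psi>" using equiv by auto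
    show "vt = vt0"
      by (rule lin_unique[of ?V B2]) (use bl sy pd Vlc vt vt0 in auto)
  qed
qed

lemma part1:
  assumes u: "u \<in> polys q" and v: "v \<in> polys s" and fl: "flux_ok \<Omega> S vs gs" and c: "c > 0"
  shows "\<exists>!p. fst p \<in> polys q \<and> snd p \<in> polys s \<and> dg_scheme \<Omega> S nrm c w q s u v vs gs (fst p) (snd p)"
proof -
  have up: "ispoly u" and vp: "ispoly v" using u v by (auto intro: polys_ispoly)
  define P where "P = (\<lambda>ut. ut \<in> polys q \<and>
     (\<forall>\<phi>\<in>polys q.
        (LINT x:\<Omega>|lborel. c\<^sup>2 * (grad \<phi> x \<bullet> grad (\<lambda>y. ut y + w \<bullet> grad u y - v y) x))
        = (LINT x|S. c\<^sup>2 * (vs x - v x) * (grad \<phi> x \<bullet> nrm x)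
                     - c\<^sup>2 * (grad \<phi> x \<bullet> (gs x - grad u x)) * (w \<bullet> nrm x))) \<and>
     (\<forall>k::real. (LINT x:\<Omega>|lborel. k * (ut x + w \<bullet> grad u x - v x)) = 0))"
  define Q where "Q = (\<lambda>vt. vt \<in> polys s \<and>
     (\<forall>\<phi>\<in>polys s.
        (LINT x:\<Omega>|lborel. \<phi> x * vt x + \<phi> x * (w \<bullet> grad v x) + c\<^sup>2 * (grad u x \<bullet> grad \<phi> x))
        = (LINT x|S. c\<^sup>2 * \<phi> x * (gs x \<bullet> nrm x) - (vs x - v x) * \<phi> x * (w \<bullet> nrm x))))"
  have "\<exists>!ut. P ut" unfolding P_def by (rule ut_part[OF up vp fl c])
  then obtain ut where ut: "P ut" and utu: "\<forall>y. P y \<longrightarrow> y = ut" by (elim ex1E) blast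
  have "\<exists>!vt. Q vt" unfolding Q_def by (rule vt_part[OF up vp fl])
  then obtain vt where vt: "Q vt" and vtu: "\<forall>y. Q y \<longrightarrow> y = vt" by (elim ex1E) blast
  have eq: "(fst p \<in> polys q \<and> snd p \<in> polys s \<and> dg_scheme \<Omega> S nrm c w q s u v vs gs (fst p) (snd p))
      \<longleftrightarrow> P (fst p) \<and> Q (snd p)" for p :: "(real^'n \<Rightarrow> real) \<times> (real^'n \<Rightarrow> real)"
    unfolding P_def Q_def dg_scheme_def by blast
  show ?thesis
  proof (rule ex1I[of _ "(ut, vt)"])
    show "fst (ut, vt) \<in> polys q \<and> snd (ut, vt) \<in> polys s \<and> dg_scheme \<Omega> S nrm c w q s u v vs gs (fst (ut, vt)) (snd (ut, vt))"
      unfolding eq using ut vt by simp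
  next
    fix p :: "(real^'n \<Rightarrow> real) \<times> (real^'n \<Rightarrow> real)"
    assume p: "fst p \<in> polys q \<and> snd p \<in> polys s \<and> dg_scheme \<Omega> S nrm c w q s u v vs gs (fst p) (snd p)"
    then have "P (fst p)" "Q (snd p)" unfolding eq by auto
    then show "p = (ut, vt)" using utu vtu by (simp add: prod_eq_iff)
  qed
qed

end


context dgctx begin

lemma quad_L2:
  assumes P: "finite P" "\<And>p. p \<in> P \<Longrightarrow> ispoly (\<Lambda> p)"
    and f: "\<And>x. f x = (\<Sum>p\<in>P. a p * \<Lambda> p x)" and g: "\<And>x. g x = (\<Sum>p\<in>P. b p * \<Lambda> p x)"
  shows "(LINT x:\<Omega>|lborel. k * f x * g x) = (\<Sum>p\<in>P. \<Sum>p'\<in>P. a p * b p' * (LINT x:\<Omega>|lborel. k * \<Lambda> p x * \<Lambda> p' x))"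
proof -
  have pt: "k * f x * g x = (\<Sum>p\<in>P. \<Sum>p'\<in>P. a p * b p' * (k * \<Lambda> p x * \<Lambda> p' x))" for x
  proof -
    have "k * f x * g x = k * (\<Sum>p\<in>P. \<Sum>p'\<in>P. (a p * \<Lambda> p x) * (b p' * \<Lambda> p' x))"
      unfolding f g by (simp add: sum_product mult.assoc)
    also have "\<dots> = (\<Sum>p\<in>P. \<Sum>p'\<in>P. k * ((a p * \<Lambda> p x) * (b p' * \<Lambda> p' x)))"
      by (simp add: sum_distrib_left)
    also have "\<dots> = (\<Sum>p\<in>P. \<Sum>p'\<in>P. a p * b p' * (k * \<Lambda> p x * \<Lambda> p' x))"
      by (intro sum.cong refl) (simp add: algebra_simps)
    finally show ?thesis .
  qed
  have ip: "ispoly (\<lambda>x. k * \<Lambda> p x * \<Lambda> p' x)" if "p \<in> P" "p' \<in> P" for p p'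
    using P(2)[OF that(1)] P(2)[OF that(2)] by (intro ip_mult ip_scale)
  have "(LINT x:\<Omega>|lborel. k * f x * g x) = (LINT x:\<Omega>|lborel. (\<Sum>p\<in>P. \<Sum>p'\<in>P. a p * b p' * (k * \<Lambda> p x * \<Lambda> p' x)))"
    by (simp only: pt)
  also have "\<dots> = (\<Sum>p\<in>P. (LINT x:\<Omega>|lborel. (\<Sum>p'\<in>P. a p * b p' * (k * \<Lambda> p x * \<Lambda> p' x))))"
    using P ip by (intro Isum[OF bo op] ip_sum ip_scale) auto
  also have "\<dots> = (\<Sum>p\<in>P. \<Sum>p'\<in>P. (LINT x:\<Omega>|lborel. a p * b p' * (k * \<Lambda> p x * \<Lambda> p' x)))"
    using P ip by (intro sum.cong refl Isum[OF bo op] ip_scale) auto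
  also have "\<dots> = (\<Sum>p\<in>P. \<Sum>p'\<in>P. a p * b p' * (LINT x:\<Omega>|lborel. k * \<Lambda> p x * \<Lambda> p' x))"
    by (simp add: Imult)
  finally show ?thesis .
qed

lemma quad_G:
  assumes P: "finite P" "\<And>p. p \<in> P \<Longrightarrow> ispoly (\<Lambda> p)"
    and f: "\<And>x. f x = (\<Sum>p\<in>P. a p * \<Lambda> p x)" and g: "\<And>x. g x = (\<Sum>p\<in>P. b p * \<Lambda> p x)"
  shows "(LINT x:\<Omega>|lborel. k * (grad f x \<bullet> grad g x)) = (\<Sum>p\<in>P. \<Sum>p'\<in>P. a p * b p' * (LINT x:\<Omega>|lborel. k * (grad (\<Lambda> p) x \<bullet> grad (\<Lambda> p') x)))"
proof -
  have fe: "f = (\<lambda>x. \<Sum>p\<in>P. a p * \<Lambda> p x)" using f by (simp add: fun_eq_iff)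
  have ge: "g = (\<lambda>x. \<Sum>p\<in>P. b p * \<Lambda> p x)" using g by (simp add: fun_eq_iff)
  have gf: "grad f x = (\<Sum>p\<in>P. a p *\<^sub>R grad (\<Lambda> p) x)" for x
    unfolding fe using P by (simp add: grad_sum grad_scale ip_scale)
  have gg: "grad g x = (\<Sum>p\<in>P. b p *\<^sub>R grad (\<Lambda> p) x)" for x
    unfolding ge using P by (simp add: grad_sum grad_scale ip_scale)
  have pt: "k * (grad f x \<bullet> grad g x) = (\<Sum>p\<in>P. \<Sum>p'\<in>P. a p * b p' * (k * (grad (\<Lambda> p) x \<bullet> grad (\<Lambda> p') x)))" for x
  proof -
    have "grad f x \<bullet> grad g x = (\<Sum>p\<in>P. (a p *\<^sub>R grad (\<Lambda> p) x) \<bullet> grad g x)"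
      unfolding gf inner_sum_left ..
    also have "\<dots> = (\<Sum>p\<in>P. \<Sum>p'\<in>P. (a p *\<^sub>R grad (\<Lambda> p) x) \<bullet> (b p' *\<^sub>R grad (\<Lambda> p') x))"
      unfolding gg inner_sum_right ..
    also have "\<dots> = (\<Sum>p\<in>P. \<Sum>p'\<in>P. a p * b p' * (grad (\<Lambda> p) x \<bullet> grad (\<Lambda> p') x))"
      by (intro sum.cong refl) (simp add: algebra_simps)
    finally have "k * (grad f x \<bullet> grad g x) = k * (\<Sum>p\<in>P. \<Sum>p'\<in>P. a p * b p' * (grad (\<Lambda> p) x \<bullet> grad (\<Lambda> p') x))"
      by simp
    also have "\<dots> = (\<Sum>p\<in>P. \<Sum>p'\<in>P. k * (a p * b p' * (grad (\<Lambda> p) x \<bullet> grad (\<Lambda> p') x)))"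
      by (simp add: sum_distrib_left)
    also have "\<dots> = (\<Sum>p\<in>P. \<Sum>p'\<in>P. a p * b p' * (k * (grad (\<Lambda> p) x \<bullet> grad (\<Lambda> p') x)))"
      by (intro sum.cong refl) (simp add: algebra_simps)
    finally show ?thesis .
  qed
  have ip: "ispoly (\<lambda>x. grad (\<Lambda> p) x \<bullet> grad (\<Lambda> p') x)" if "p \<in> P" "p' \<in> P" for p p'
    using P(2)[OF that(1)] P(2)[OF that(2)] by (rule ip_inner_grad)
  have "(LINT x:\<Omega>|lborel. k * (grad f x \<bullet> grad g x)) = (LINT x:\<Omega>|lborel. (\<Sum>p\<in>P. \<Sum>p'\<in>P. a p * b p' * (k * (grad (\<Lambda> p) x \<bullet> grad (\<Lambda> p') x))))"
    by (simp only: pt)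
  also have "\<dots> = (\<Sum>p\<in>P. (LINT x:\<Omega>|lborel. (\<Sum>p'\<in>P. a p * b p' * (k * (grad (\<Lambda> p) x \<bullet> grad (\<Lambda> p') x)))))"
    using P(1) by (intro Isum[OF bo op] ip_sum ip_scale ip) auto
  also have "\<dots> = (\<Sum>p\<in>P. \<Sum>p'\<in>P. (LINT x:\<Omega>|lborel. a p * b p' * (k * (grad (\<Lambda> p) x \<bullet> grad (\<Lambda> p') x))))"
    using P(1) by (intro sum.cong refl Isum[OF bo op] ip_scale ip) auto
  also have "\<dots> = (\<Sum>p\<in>P. \<Sum>p'\<in>P. a p * b p' * (LINT x:\<Omega>|lborel. k * (grad (\<Lambda> p) x \<bullet> grad (\<Lambda> p') x)))"
    by (simp add: Imult)
  finally show ?thesis .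
qed

lemma energy_split:
  assumes "ispoly U" "ispoly V"
  shows "dg_energy \<Omega> c U V = (LINT x:\<Omega>|lborel. (1/2) * V x * V x) + (LINT x:\<Omega>|lborel. (1/2 * c\<^sup>2) * (grad U x \<bullet> grad U x))"
proof -
  have e: "(\<lambda>x. 1/2 * (V x)\<^sup>2 + 1/2 * c\<^sup>2 * (norm (grad U x))\<^sup>2) = (\<lambda>x. (1/2) * V x * V x + (1/2 * c\<^sup>2) * (grad U x \<bullet> grad U x))"
    unfolding power2_norm_eq_inner by (rule ext) (simp only: power2_eq_square mult.assoc)
  have p1: "ispoly (\<lambda>x. (1/2) * V x * V x)" using assms(2) by (intro ip_mult ip_scale)
  have p2: "ispoly (\<lambda>x. (1/2 * c\<^sup>2) * (grad U x \<bullet> grad U x))" using assms(1) by (intro ip_scale ip_inner_grad)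
  show ?thesis unfolding dg_energy_def e by (rule IaddP[OF p1 p2])
qed

lemma energy_deriv:
  fixes U V Ut Vt :: "real \<Rightarrow> real^'n \<Rightarrow> real"
  assumes T: "open T" "t \<in> T"
    and mem: "\<And>\<tau>. \<tau> \<in> T \<Longrightarrow> U \<tau> \<in> polys q \<and> V \<tau> \<in> polys s"
    and mt: "Ut t \<in> polys q" "Vt t \<in> polys s"
    and dU: "\<And>x. ((\<lambda>\<tau>. U \<tau> x) has_real_derivative Ut t x) (at t)"
    and dV: "\<And>x. ((\<lambda>\<tau>. V \<tau> x) has_real_derivative Vt t x) (at t)"
  shows "((\<lambda>\<tau>. dg_energy \<Omega> c (U \<tau>) (V \<tau>)) has_real_derivative
     (LINT x:\<Omega>|lborel. V t x * Vt t x) + (LINT x:\<Omega>|lborel. c\<^sup>2 * (grad (U t) x \<bullet> grad (Ut t) x))) (at t)"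
proof -
  obtain P :: "(real^'n) set" and \<Lambda> :: "real^'n \<Rightarrow> real^'n \<Rightarrow> real" where P: "finite P" "\<forall>p\<in>P. \<Lambda> p \<in> polys q" "\<forall>f\<in>polys q. \<forall>x. f x = (\<Sum>p\<in>P. f p * \<Lambda> p x)"
    using lin_interp[OF finite_multi_idx, of q monomial_fn] unfolding polys_linI[symmetric] by blast
  obtain P2 :: "(real^'n) set" and \<Lambda>2 :: "real^'n \<Rightarrow> real^'n \<Rightarrow> real" where P2: "finite P2" "\<forall>p\<in>P2. \<Lambda>2 p \<in> polys s" "\<forall>f\<in>polys s. \<forall>x. f x = (\<Sum>p\<in>P2. f p * \<Lambda>2 p x)"
    using lin_interp[OF finite_multi_idx, of s monomial_fn] unfolding polys_linI[symmetric] by blast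
  have LP: "\<And>p. p \<in> P \<Longrightarrow> ispoly (\<Lambda> p)" using P(2) polys_ispoly by blast
  have LP2: "\<And>p. p \<in> P2 \<Longrightarrow> ispoly (\<Lambda>2 p)" using P2(2) polys_ispoly by blast
  define M where "M = (\<lambda>p p'. LINT x:\<Omega>|lborel. (1/2) * \<Lambda>2 p x * \<Lambda>2 p' x)"
  define N where "N = (\<lambda>p p'. LINT x:\<Omega>|lborel. (1/2 * c\<^sup>2) * (grad (\<Lambda> p) x \<bullet> grad (\<Lambda> p') x))"
  define EQ where "EQ = (\<lambda>\<tau>. (\<Sum>p\<in>P2. \<Sum>p'\<in>P2. V \<tau> p * V \<tau> p' * M p p') + (\<Sum>p\<in>P. \<Sum>p'\<in>P. U \<tau> p * U \<tau> p' * N p p'))"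
  have EQ_eq: "EQ \<tau> = dg_energy \<Omega> c (U \<tau>) (V \<tau>)" if "\<tau> \<in> T" for \<tau>
  proof -
    have Um: "U \<tau> \<in> polys q" and Vm: "V \<tau> \<in> polys s" using mem[OF that] by auto
    have "(LINT x:\<Omega>|lborel. (1/2) * V \<tau> x * V \<tau> x) = (\<Sum>p\<in>P2. \<Sum>p'\<in>P2. V \<tau> p * V \<tau> p' * M p p')"
      unfolding M_def by (rule quad_L2[OF P2(1) LP2]) (use P2(3) Vm in blast)+
    moreover have "(LINT x:\<Omega>|lborel. (1/2 * c\<^sup>2) * (grad (U \<tau>) x \<bullet> grad (U \<tau>) x)) = (\<Sum>p\<in>P. \<Sum>p'\<in>P. U \<tau> p * U \<tau> p' * N p p')"
      unfolding N_def by (rule quad_G[OF P(1) LP]) (use P(3) Um in blast)+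
    ultimately show ?thesis unfolding EQ_def using energy_split[OF polys_ispoly[OF Um] polys_ispoly[OF Vm]] by simp
  qed
  have dEQ: "(EQ has_real_derivative
      (\<Sum>p\<in>P2. \<Sum>p'\<in>P2. (Vt t p * V t p' + Vt t p' * V t p) * M p p') +
      (\<Sum>p\<in>P. \<Sum>p'\<in>P. (Ut t p * U t p' + Ut t p' * U t p) * N p p')) (at t)"
    unfolding EQ_def by (intro DERIV_add DERIV_sum DERIV_cmult_right DERIV_mult dU dV)
  have v1: "(\<Sum>p\<in>P2. \<Sum>p'\<in>P2. (Vt t p * V t p' + Vt t p' * V t p) * M p p') = (LINT x:\<Omega>|lborel. V t x * Vt t x)"
  proof -
    have Vm: "V t \<in> polys s" using mem[OF T(2)] by auto
    have a: "(LINT x:\<Omega>|lborel. (1/2) * Vt t x * V t x) = (\<Sum>p\<in>P2. \<Sum>p'\<in>P2. Vt t p * V t p' * M p p')"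
      unfolding M_def by (rule quad_L2[OF P2(1) LP2]) (use P2(3) Vm mt in blast)+
    have b: "(LINT x:\<Omega>|lborel. (1/2) * V t x * Vt t x) = (\<Sum>p\<in>P2. \<Sum>p'\<in>P2. V t p * Vt t p' * M p p')"
      unfolding M_def by (rule quad_L2[OF P2(1) LP2]) (use P2(3) Vm mt in blast)+
    have ip: "ispoly (V t)" "ispoly (Vt t)" using Vm mt polys_ispoly by auto
    have "(LINT x:\<Omega>|lborel. V t x * Vt t x) = (LINT x:\<Omega>|lborel. (1/2) * Vt t x * V t x + (1/2) * V t x * Vt t x)"
      by (simp add: algebra_simps)
    also have "\<dots> = (LINT x:\<Omega>|lborel. (1/2) * Vt t x * V t x) + (LINT x:\<Omega>|lborel. (1/2) * V t x * Vt t x)"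
      using ip by (intro IaddP ip_mult ip_scale)
    also have "\<dots> = (\<Sum>p\<in>P2. \<Sum>p'\<in>P2. (Vt t p * V t p' + Vt t p' * V t p) * M p p')"
      unfolding a b by (simp add: sum.distrib[symmetric] algebra_simps)
    finally show ?thesis by simp
  qed
  have u1: "(\<Sum>p\<in>P. \<Sum>p'\<in>P. (Ut t p * U t p' + Ut t p' * U t p) * N p p') = (LINT x:\<Omega>|lborel. c\<^sup>2 * (grad (U t) x \<bullet> grad (Ut t) x))"
  proof -
    have Um: "U t \<in> polys q" using mem[OF T(2)] by auto
    have a: "(LINT x:\<Omega>|lborel. (1/2 * c\<^sup>2) * (grad (Ut t) x \<bullet> grad (U t) x)) = (\<Sum>p\<in>P. \<Sum>p'\<in>P. Ut t p * U t p' * N p p')"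
      unfolding N_def by (rule quad_G[OF P(1) LP]) (use P(3) Um mt in blast)+
    have b: "(LINT x:\<Omega>|lborel. (1/2 * c\<^sup>2) * (grad (U t) x \<bullet> grad (Ut t) x)) = (\<Sum>p\<in>P. \<Sum>p'\<in>P. U t p * Ut t p' * N p p')"
      unfolding N_def by (rule quad_G[OF P(1) LP]) (use P(3) Um mt in blast)+
    have ip: "ispoly (U t)" "ispoly (Ut t)" using Um mt polys_ispoly by auto
    have "(LINT x:\<Omega>|lborel. c\<^sup>2 * (grad (U t) x \<bullet> grad (Ut t) x)) =
       (LINT x:\<Omega>|lborel. (1/2 * c\<^sup>2) * (grad (Ut t) x \<bullet> grad (U t) x) + (1/2 * c\<^sup>2) * (grad (U t) x \<bullet> grad (Ut t) x))"
      by (simp add: algebra_simps inner_commute)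
    also have "\<dots> = (LINT x:\<Omega>|lborel. (1/2 * c\<^sup>2) * (grad (Ut t) x \<bullet> grad (U t) x)) + (LINT x:\<Omega>|lborel. (1/2 * c\<^sup>2) * (grad (U t) x \<bullet> grad (Ut t) x))"
      using ip by (intro IaddP ip_inner_grad ip_scale)
    also have "\<dots> = (\<Sum>p\<in>P. \<Sum>p'\<in>P. (Ut t p * U t p' + Ut t p' * U t p) * N p p')"
      unfolding a b by (simp add: sum.distrib[symmetric] algebra_simps)
    finally show ?thesis by simp
  qed
  have "(EQ has_real_derivative (LINT x:\<Omega>|lborel. V t x * Vt t x) + (LINT x:\<Omega>|lborel. c\<^sup>2 * (grad (U t) x \<bullet> grad (Ut t) x))) (at t)"
    using dEQ unfolding v1 u1 .
  then show ?thesis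
    by (rule has_field_derivative_transform_within_open[OF _ T(1) T(2)]) (rule EQ_eq)
qed

end


context dgctx begin

lemma divW: "ispoly G \<Longrightarrow> (LINT x:\<Omega>|lborel. w \<bullet> grad G x) = (LINT x|S. G x * (w \<bullet> nrm x))"
proof -
  assume G: "ispoly G"
  have each: "(LINT x:\<Omega>|lborel. w $ i * grad G x $ i) = (LINT x|S. w $ i * G x * nrm x $ i)" for i
  proof -
    have "(LINT x:\<Omega>|lborel. grad (\<lambda>x. w $ i * G x) x $ i) = (LINT x|S. w $ i * G x * nrm x $ i)"
      using div_ip[OF ip_scale[OF G], of "w $ i" i] by (simp add: mult.assoc)
    then show ?thesis using G by (simp add: grad_scale)
  qed
  have "(LINT x:\<Omega>|lborel. w \<bullet> grad G x) = (LINT x:\<Omega>|lborel. (\<Sum>i\<in>UNIV. w $ i * grad G x $ i))"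
    by (simp add: inner_vec_def)
  also have "\<dots> = (\<Sum>i\<in>UNIV. (LINT x:\<Omega>|lborel. w $ i * grad G x $ i))"
    using G by (intro Isum[OF bo op] ip_scale ip_grad) auto
  also have "\<dots> = (\<Sum>i\<in>UNIV. (LINT x|S. w $ i * G x * nrm x $ i))" using each by simp
  also have "\<dots> = (LINT x|S. (\<Sum>i\<in>UNIV. w $ i * G x * nrm x $ i))"
    using G by (intro Ssum[OF fm, symmetric] sok_mult sok_const sokP sokN) auto
  also have "\<dots> = (LINT x|S. G x * (w \<bullet> nrm x))"
    by (simp add: inner_vec_def sum_distrib_left algebra_simps)
  finally show ?thesis .
qed

lemma div_V: "ispoly V \<Longrightarrow> (LINT x:\<Omega>|lborel. V x * (w \<bullet> grad V x)) = (LINT x|S. (1/2 * V x * V x) * (w \<bullet> nrm x))"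
proof -
  assume V: "ispoly V"
  have g: "grad (\<lambda>x. 1/2 * V x * V x) x = V x *\<^sub>R grad V x" for x
    unfolding grad_mult[OF ip_scale[OF V] V] grad_scale[OF V] by (simp add: vec_eq_iff algebra_simps)
  have e: "(\<lambda>x. w \<bullet> grad (\<lambda>x. 1/2 * V x * V x) x) = (\<lambda>x. V x * (w \<bullet> grad V x))"
    unfolding g by (simp only: inner_scaleR_right)
  have ip: "ispoly (\<lambda>x. 1/2 * V x * V x)" using V by (intro ip_mult ip_scale)
  show ?thesis using divW[OF ip, where w=w] unfolding e .
qed

lemma pt_L1: "ispoly U \<Longrightarrow> grad U x \<bullet> grad (\<lambda>y. w \<bullet> grad U y) x
   = (\<Sum>j\<in>UNIV. grad U x $ j * (w \<bullet> grad (\<lambda>y. grad U y $ j) x))"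
proof -
  assume U: "ispoly U"
  have "grad U x \<bullet> grad (\<lambda>y. w \<bullet> grad U y) x = (\<Sum>i\<in>UNIV. w $ i * (grad U x \<bullet> grad (\<lambda>y. grad U y $ i) x))"
    unfolding grad_w_grad[OF U] by (simp add: inner_sum_right)
  also have "\<dots> = (\<Sum>i\<in>UNIV. \<Sum>j\<in>UNIV. w $ i * (grad U x $ j * grad (\<lambda>y. grad U y $ i) x $ j))"
    by (simp add: inner_vec_def sum_distrib_left)
  also have "\<dots> = (\<Sum>i\<in>UNIV. \<Sum>j\<in>UNIV. w $ i * (grad U x $ j * grad (\<lambda>y. grad U y $ j) x $ i))"
    using grad_mixed[OF U] by simp
  also have "\<dots> = (\<Sum>j\<in>UNIV. \<Sum>i\<in>UNIV. w $ i * (grad U x $ j * grad (\<lambda>y. grad U y $ j) x $ i))"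
    by (rule sum.swap)
  also have "\<dots> = (\<Sum>j\<in>UNIV. grad U x $ j * (w \<bullet> grad (\<lambda>y. grad U y $ j) x))"
    by (simp add: inner_vec_def sum_distrib_left algebra_simps)
  finally show ?thesis .
qed

lemma pt_L2: "ispoly U \<Longrightarrow> w \<bullet> grad (\<lambda>x. grad U x \<bullet> grad U x) x
   = (\<Sum>j\<in>UNIV. 2 * grad U x $ j * (w \<bullet> grad (\<lambda>y. grad U y $ j) x))"
proof -
  assume U: "ispoly U"
  have e: "(\<lambda>x. grad U x \<bullet> grad U x) = (\<lambda>x. \<Sum>j\<in>UNIV. grad U x $ j * grad U x $ j)" by (simp add: inner_vec_def)
  have "grad (\<lambda>x. grad U x \<bullet> grad U x) x = (\<Sum>j\<in>UNIV. grad (\<lambda>x. grad U x $ j * grad U x $ j) x)"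
    unfolding e by (intro grad_sum ip_mult ip_grad) (simp_all add: U)
  also have "\<dots> = (\<Sum>j\<in>UNIV. (2 * grad U x $ j) *\<^sub>R grad (\<lambda>y. grad U y $ j) x)"
    using U by (intro sum.cong refl) (simp add: grad_mult ip_grad scaleR_add_left[symmetric])
  finally show ?thesis by (simp add: inner_sum_right)
qed

lemma div_U: "ispoly U \<Longrightarrow> (LINT x:\<Omega>|lborel. c\<^sup>2 * (grad U x \<bullet> grad (\<lambda>y. w \<bullet> grad U y) x))
   = (LINT x|S. (1/2 * c\<^sup>2 * (grad U x \<bullet> grad U x)) * (w \<bullet> nrm x))"
proof -
  assume U: "ispoly U"
  have ipg: "ispoly (\<lambda>x. grad U x \<bullet> grad U x)" by (rule ip_inner_grad[OF U U])
  have "w \<bullet> grad (\<lambda>x. 1/2 * c\<^sup>2 * (grad U x \<bullet> grad U x)) x = c\<^sup>2 * (grad U x \<bullet> grad (\<lambda>y. w \<bullet> grad U y) x)" for x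
  proof -
    have "w \<bullet> grad (\<lambda>x. 1/2 * c\<^sup>2 * (grad U x \<bullet> grad U x)) x = 1/2 * c\<^sup>2 * (w \<bullet> grad (\<lambda>x. grad U x \<bullet> grad U x) x)"
      by (simp only: grad_scale[OF ipg] inner_scaleR_right)
    also have "\<dots> = c\<^sup>2 * (\<Sum>j\<in>UNIV. grad U x $ j * (w \<bullet> grad (\<lambda>y. grad U y $ j) x))"
      unfolding pt_L2[OF U] by (simp add: sum_distrib_left algebra_simps)
    also have "\<dots> = c\<^sup>2 * (grad U x \<bullet> grad (\<lambda>y. w \<bullet> grad U y) x)" unfolding pt_L1[OF U] ..
    finally show ?thesis .
  qed
  then have e: "(\<lambda>x. w \<bullet> grad (\<lambda>x. 1/2 * c\<^sup>2 * (grad U x \<bullet> grad U x)) x) = (\<lambda>x. c\<^sup>2 * (grad U x \<bullet> grad (\<lambda>y. w \<bullet> grad U y) x))"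
    by (rule ext)
  have ip: "ispoly (\<lambda>x. 1/2 * c\<^sup>2 * (grad U x \<bullet> grad U x))" using ipg by (rule ip_scale)
  show ?thesis using divW[OF ip, where w=w] unfolding e .
qed

end


context dgctx begin

lemma flux_identity:
  assumes U: "U \<in> polys q" and V: "V \<in> polys s" and Ut: "Ut \<in> polys q" and Vt: "Vt \<in> polys s"
    and fl: "flux_ok \<Omega> S vs gs" and sch: "dg_scheme \<Omega> S nrm c w q s U V vs gs Ut Vt"
  shows "(LINT x:\<Omega>|lborel. V x * Vt x) + (LINT x:\<Omega>|lborel. c\<^sup>2 * (grad U x \<bullet> grad Ut x))
     = energy_flux S nrm c w U V vs gs"
proof -
  have up: "ispoly U" and vp: "ispoly V" and utp: "ispoly Ut" and vtp: "ispoly Vt"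
    using U V Ut Vt by (auto intro: polys_ispoly)
  define WU where "WU = (\<lambda>y. w \<bullet> grad U y)"
  have wup: "ispoly WU" unfolding WU_def using up by (rule ip_w_grad)
  have s1: "(LINT x:\<Omega>|lborel. c\<^sup>2 * (grad U x \<bullet> grad (\<lambda>y. Ut y + w \<bullet> grad U y - V y) x))
        = (LINT x|S. c\<^sup>2 * (vs x - V x) * (grad U x \<bullet> nrm x)
                     - c\<^sup>2 * (grad U x \<bullet> (gs x - grad U x)) * (w \<bullet> nrm x))"
    using sch U unfolding dg_scheme_def by blast
  have s2: "(LINT x:\<Omega>|lborel. V x * Vt x + V x * (w \<bullet> grad V x) + c\<^sup>2 * (grad U x \<bullet> grad V x))
        = (LINT x|S. c\<^sup>2 * V x * (gs x \<bullet> nrm x) - (vs x - V x) * V x * (w \<bullet> nrm x))"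
    using sch V unfolding dg_scheme_def by blast
  have g1: "grad (\<lambda>y. Ut y + w \<bullet> grad U y - V y) x = grad Ut x + grad WU x - grad V x" for x
    unfolding WU_def using utp up vp by (simp add: grad_minus grad_add ip_add ip_w_grad)
  have pA4: "ispoly (\<lambda>x. c\<^sup>2 * (grad U x \<bullet> grad Ut x))" using up utp by (intro ip_scale ip_inner_grad)
  have pA5: "ispoly (\<lambda>x. c\<^sup>2 * (grad U x \<bullet> grad WU x))" using up wup by (intro ip_scale ip_inner_grad)
  have pA3: "ispoly (\<lambda>x. c\<^sup>2 * (grad U x \<bullet> grad V x))" using up vp by (intro ip_scale ip_inner_grad)
  have pA1: "ispoly (\<lambda>x. V x * Vt x)" using vp vtp by (rule ip_mult)
  have pA2: "ispoly (\<lambda>x. V x * (w \<bullet> grad V x))" using vp by (intro ip_mult ip_w_grad)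
  have e1: "(\<lambda>x. c\<^sup>2 * (grad U x \<bullet> grad (\<lambda>y. Ut y + w \<bullet> grad U y - V y) x))
     = (\<lambda>x. (c\<^sup>2 * (grad U x \<bullet> grad Ut x) + c\<^sup>2 * (grad U x \<bullet> grad WU x)) - c\<^sup>2 * (grad U x \<bullet> grad V x))"
    unfolding g1 by (simp add: inner_add_right inner_diff_right algebra_simps)
  have l1: "(LINT x:\<Omega>|lborel. c\<^sup>2 * (grad U x \<bullet> grad (\<lambda>y. Ut y + w \<bullet> grad U y - V y) x))
      = (LINT x:\<Omega>|lborel. c\<^sup>2 * (grad U x \<bullet> grad Ut x)) + (LINT x:\<Omega>|lborel. c\<^sup>2 * (grad U x \<bullet> grad WU x))
        - (LINT x:\<Omega>|lborel. c\<^sup>2 * (grad U x \<bullet> grad V x))"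
    unfolding e1 by (simp add: IdiffP IaddP ip_add pA3 pA4 pA5)
  have l2: "(LINT x:\<Omega>|lborel. V x * Vt x + V x * (w \<bullet> grad V x) + c\<^sup>2 * (grad U x \<bullet> grad V x))
      = (LINT x:\<Omega>|lborel. V x * Vt x) + (LINT x:\<Omega>|lborel. V x * (w \<bullet> grad V x))
        + (LINT x:\<Omega>|lborel. c\<^sup>2 * (grad U x \<bullet> grad V x))"
    by (simp add: IaddP ip_add pA1 pA2 pA3)
  have d2: "(LINT x:\<Omega>|lborel. V x * (w \<bullet> grad V x)) = (LINT x|S. (1/2 * V x * V x) * (w \<bullet> nrm x))"
    by (rule div_V[OF vp])
  have d5: "(LINT x:\<Omega>|lborel. c\<^sup>2 * (grad U x \<bullet> grad WU x)) = (LINT x|S. (1/2 * c\<^sup>2 * (grad U x \<bullet> grad U x)) * (w \<bullet> nrm x))"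
    unfolding WU_def by (rule div_U[OF up])
  define I1 where "I1 = (\<lambda>x. c\<^sup>2 * (vs x - V x) * (grad U x \<bullet> nrm x)
                     - c\<^sup>2 * (grad U x \<bullet> (gs x - grad U x)) * (w \<bullet> nrm x))"
  define J2 where "J2 = (\<lambda>x. c\<^sup>2 * V x * (gs x \<bullet> nrm x) - (vs x - V x) * V x * (w \<bullet> nrm x))"
  define K1 where "K1 = (\<lambda>x. (1/2 * V x * V x) * (w \<bullet> nrm x))"
  define K2 where "K2 = (\<lambda>x. (1/2 * c\<^sup>2 * (grad U x \<bullet> grad U x)) * (w \<bullet> nrm x))"
  have vsok: "sok S vs" using fl ae unfolding flux_ok_def by (intro sok_bdd) auto
  have gsok: "sok S (\<lambda>x. gs x $ i)" for i using fl ae unfolding flux_ok_def by (intro sok_vec) auto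
  have c1: "sok S (\<lambda>x. (gs x - grad U x) $ i)" for i
    by (simp only: vector_minus_component) (intro sok_diff gsok sokG up)
  have sI1: "sok S I1" unfolding I1_def
    by (intro sok_diff sok_mult sok_const vsok sokP vp up sok_gn sok_wn sok_inner sokG c1)
  have sJ2: "sok S J2" unfolding J2_def
    by (intro sok_diff sok_mult sok_const vsok sokP vp sok_wn sok_inner gsok sokN)
  have sK1: "sok S K1" unfolding K1_def by (intro sok_mult sok_const sokP vp sok_wn)
  have sK2: "sok S K2" unfolding K2_def by (intro sok_mult sok_const sok_wn sok_inner sokG up)
  have main: "(LINT x:\<Omega>|lborel. V x * Vt x) + (LINT x:\<Omega>|lborel. c\<^sup>2 * (grad U x \<bullet> grad Ut x))
     = (LINT x|S. I1 x) + (LINT x|S. J2 x) - (LINT x|S. K1 x) - (LINT x|S. K2 x)"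
    using s1 s2 l1 l2 d2 d5 unfolding I1_def J2_def K1_def K2_def by linarith
  also have "\<dots> = (LINT x|S. I1 x + J2 x - K1 x - K2 x)"
    using sI1 sJ2 sK1 sK2 by (simp add: SaddP SdiffP sok_add sok_diff)
  also have "\<dots> = energy_flux S nrm c w U V vs gs"
  proof -
    have "(\<lambda>x. I1 x + J2 x - K1 x - K2 x) = (\<lambda>x. - 1/2 * c\<^sup>2 * (norm (grad U x))\<^sup>2 * (w \<bullet> nrm x)
               - 1/2 * (V x)\<^sup>2 * (w \<bullet> nrm x)
               + c\<^sup>2 * (vs x - V x) * (grad U x \<bullet> nrm x)
               - c\<^sup>2 * (grad U x \<bullet> (gs x - grad U x)) * (w \<bullet> nrm x)
               + c\<^sup>2 * V x * (gs x \<bullet> nrm x)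
               - V x * (vs x - V x) * (w \<bullet> nrm x))"
      unfolding I1_def J2_def K1_def K2_def power2_norm_eq_inner
      by (rule ext) (simp add: power2_eq_square algebra_simps)
    then show ?thesis unfolding energy_flux_def by simp
  qed
  finally show ?thesis .
qed

end

theorem theorem2p1:
  fixes \<Omega> :: "(real^'n::finite) set" and S :: "(real^'n) measure"
    and nrm :: "real^'n \<Rightarrow> real^'n" and c :: real and w :: "real^'n" and q s :: nat
  assumes elem: "dg_element \<Omega> S nrm" and cpos: "c > 0"
  shows
    "(\<forall>u v vs gs. u \<in> polys q \<and> v \<in> polys s \<and> flux_ok \<Omega> S vs gs \<longrightarrow>
        (\<exists>!p. fst p \<in> polys q \<and> snd p \<in> polys s \<and>
              dg_scheme \<Omega> S nrm c w q s u v vs gs (fst p) (snd p)))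
     \<and>
     (\<forall>T U V Ut Vt vs gs. open T \<and>
        (\<forall>t\<in>T. U t \<in> polys q \<and> V t \<in> polys s \<and> Ut t \<in> polys q \<and> Vt t \<in> polys s \<and>
           flux_ok \<Omega> S (vs t) (gs t) \<and>
           (\<forall>x. ((\<lambda>\<tau>. U \<tau> x) has_real_derivative Ut t x) (at t)) \<and>
           (\<forall>x. ((\<lambda>\<tau>. V \<tau> x) has_real_derivative Vt t x) (at t)) \<and>
           dg_scheme \<Omega> S nrm c w q s (U t) (V t) (vs t) (gs t) (Ut t) (Vt t))
        \<longrightarrow> (\<forall>t\<in>T. ((\<lambda>\<tau>. dg_energy \<Omega> c (U \<tau>) (V \<tau>)) has_real_derivative
                        energy_flux S nrm c w (U t) (V t) (vs t) (gs t)) (at t)))"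
proof -
  have E: "open \<Omega>" "bounded \<Omega>" "\<Omega> \<noteq> {}" "sets S = sets lborel" "emeasure S (space S) < \<infinity>"
    "AE x in S. x \<in> frontier \<Omega>" "nrm \<in> borel_measurable S" "AE x in S. norm (nrm x) = 1"
    "\<And>g k i. g \<in> polys k \<Longrightarrow>
        (LINT x:\<Omega>|lborel. frechet_derivative g (at x) (axis i 1)) = (LINT x|S. g x * (nrm x $ i))"
    using elem unfolding dg_element_def by blast+
  have fm: "finite_measure S" using E(5) by (intro finite_measureI) auto
  interpret dgctx \<Omega> S nrm by (rule dgctx.intro[OF E(2) E(1) E(3) E(4) fm E(6) E(7) E(8) E(9)])
  show ?thesis
  proof (intro conjI allI impI ballI)
    fix u v vs :: "real^'n \<Rightarrow> real" and gs :: "real^'n \<Rightarrow> real^'n" assume "u \<in> polys q \<and> v \<in> polys s \<and> flux_ok \<Omega> S vs gs"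
    then show "\<exists>!p. fst p \<in> polys q \<and> snd p \<in> polys s \<and> dg_scheme \<Omega> S nrm c w q s u v vs gs (fst p) (snd p)"
      using part1 cpos by blast
  next
    fix T :: "real set" and U V Ut Vt vs :: "real \<Rightarrow> real^'n \<Rightarrow> real" and gs :: "real \<Rightarrow> real^'n \<Rightarrow> real^'n" and t :: real
    assume H: "open T \<and>
        (\<forall>t\<in>T. U t \<in> polys q \<and> V t \<in> polys s \<and> Ut t \<in> polys q \<and> Vt t \<in> polys s \<and>
           flux_ok \<Omega> S (vs t) (gs t) \<and>
           (\<forall>x. ((\<lambda>\<tau>. U \<tau> x) has_real_derivative Ut t x) (at t)) \<and>
           (\<forall>x. ((\<lambda>\<tau>. V \<tau> x) has_real_derivative Vt t x) (at t)) \<and>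
           dg_scheme \<Omega> S nrm c w q s (U t) (V t) (vs t) (gs t) (Ut t) (Vt t))"
      and t: "t \<in> T"
    have d: "((\<lambda>\<tau>. dg_energy \<Omega> c (U \<tau>) (V \<tau>)) has_real_derivative
     (LINT x:\<Omega>|lborel. V t x * Vt t x) + (LINT x:\<Omega>|lborel. c\<^sup>2 * (grad (U t) x \<bullet> grad (Ut t) x))) (at t)"
      by (rule energy_deriv[where q=q and s=s]) (use H t in auto)
    have i: "(LINT x:\<Omega>|lborel. V t x * Vt t x) + (LINT x:\<Omega>|lborel. c\<^sup>2 * (grad (U t) x \<bullet> grad (Ut t) x))
       = energy_flux S nrm c w (U t) (V t) (vs t) (gs t)"
      by (rule flux_identity[where q=q and s=s]) (use H t in auto)
    show "((\<lambda>\<tau>. dg_energy \<Omega> c (U \<tau>) (V \<tau>)) has_real_derivative energy_flux S nrm c w (U t) (V t) (vs t) (gs t)) (at t)"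
      using d unfolding i .
  qed
qed


end
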